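(* For every $(\varepsilon,\delta)\in(0,1)\times[0,\delta_0]$, $$\mathcal R^\ast(\varepsilon,\delta|p_{X_1X_2},p_{K_1K_2})\subseteq\mathcal R^{(\rm out)}(p_{X_1X_2},p_{K_1K_2}),$$ where $\mathcal R^{(\rm out)}(p_{X_1X_2},p_{K_1K_2}):=\mathcal R_{\rm sw}(p_{X_1X_2})$ if $\mathcal R_{\rm key}(p_{K_1K_2})\cap\mathcal R_{\rm sw}(p_{X_1X_2})\neq\emptyset$, and $:=\emptyset$ otherwise.
   Context: All logarithms are base 2. $\mathcal X_1,\mathcal X_2$ are finite fields. $(X_1,X_2)$ has joint pmf $p_{X_1X_2}$ on $\mathcal X_1\times\mathcal X_2$ and $(K_1,K_2)$ has joint pmf $p_{K_1K_2}$ on $\mathcal X_1\times\mathcal X_2$. For block length $n$, $(\mathbf X_1,\mathbf X_2)$ is i.i.d. with law $p^n_{X_1X_2}$ (source), $(\mathbf K_1,\mathbf K_2)$ is i.i.d. with law $p^n_{K_1K_2}$ (keys), and the keys are independent of the sources. A distributed source encryption system at block length $n$ consists of finite sets $\mathcal C_i^{(n)}$, encryption maps $\Phi_i^{(n)}:\mathcal X_i^n\times\mathcal X_i^n\to\mathcal C_i^{(n)}$ (key, plaintext) and a decryption map $\Psi^{(n)}:\mathcal X_1^n\times\mathcal X_2^n\times\mathcal C_1^{(n)}\times\mathcal C_2^{(n)}\to\mathcal X_1^n\times\mathcal X_2^n$, such that there exist maps $\phi_i^{(n)}:\mathcal X_i^n\to\mathcal M_i^{(n)}$ (finite $\mathcal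 M_i^{(n)}$) and $\psi^{(n)}$ with $\Psi^{(n)}(\mathbf k_1,\mathbf k_2,\Phi_1^{(n)}(\mathbf k_1,\mathbf x_1),\Phi_2^{(n)}(\mathbf k_2,\mathbf x_2))=\psi^{(n)}(\phi_1^{(n)}(\mathbf x_1),\phi_2^{(n)}(\mathbf x_2))$ for all keys and plaintexts. Ciphertexts: $C_i^{(n)}=\Phi_i^{(n)}(\mathbf K_i,\mathbf X_i)$. Correct decoding set $\mathcal D^{(n)}:=\{(\mathbf x_1,\mathbf x_2):\psi^{(n)}(\phi_1^{(n)}(\mathbf x_1),\phi_2^{(n)}(\mathbf x_2))=(\mathbf x_1,\mathbf x_2)\}$; error probability $p_{\rm e}:=\Pr[(\mathbf X_1,\mathbf X_2)\notin\mathcal D^{(n)}]$. Fix a constant $\delta_0>0$. For $(\varepsilon,\delta)\in(0,1)\times[0,\delta_0]$, $(R_1,R_2)$ is an $(\varepsilon,\delta)$-reliable and secure rate pair if there is a sequence of systems $\{(\Phi_1^{(n)},\Phi_2^{(n)},\Psi^{(n)})\}_{n\ge1}$ such that for every $\gamma>0$ there is $n_0$ with, for all $n\ge n_0$: $\frac1n\log|\mathcal C_i^{(n)}|\le R_i+\gamma$ ($i=1,2$), $p_{\rm e}\le\varepsilon$, and $I(C_1^{(n)}C_2^{(n)};\mathbf X_1\mathbf X_2)\le\delta$. $\mathcal R^\ast(\varepsilon,\delta|p_{X_1X_2},p_{K_1K_2})$ is the set of such pairs. $\mathcal R_{\rm sw}(p_{X_1X_2}):=\{(R_1,R_2):R_1\ge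 H(X_1|X_2),R_2\ge H(X_2|X_1),R_1+R_2\ge H(X_1X_2)\}$, $\mathcal R_{\rm key}(p_{K_1K_2}):=\{(R_1,R_2):R_1\le H(K_1),R_2\le H(K_2),R_1+R_2\le H(K_1K_2)\}$. *)

theory Defs
  imports "HOL-Probability.Probability"
begin

definition ent :: "'a pmf \<Rightarrow> real" where
  "ent P = - (\<Sum>x\<in>set_pmf P. pmf P x * log 2 (pmf P x))"

definition mutinf :: "('u \<times> 'v) pmf \<Rightarrow> real" where
  "mutinf J = (\<Sum>z\<in>set_pmf J. pmf J z *
      log 2 (pmf J z / (pmf (map_pmf fst J) (fst z) * pmf (map_pmf snd J) (snd z))))"

fun iid :: "nat \<Rightarrow> 'a pmf \<Rightarrow> 'a list pmf" where
  "iid 0 P = return_pmf []"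
| "iid (Suc n) P = do { x \<leftarrow> P; xs \<leftarrow> iid n P; return_pmf (x # xs) }"

(* Joint law of ((C1,C2),(X1,X2)) at block length n: sources i.i.d. pX (pairs),
   keys i.i.d. pK, independent; C_i = Phi_i(K_i, X_i). *)
definition cipher_joint ::
  "nat \<Rightarrow> ('a \<times> 'b) pmf \<Rightarrow> ('a \<times> 'b) pmf \<Rightarrow> ('a list \<Rightarrow> 'a list \<Rightarrow> 'c1)
     \<Rightarrow> ('b list \<Rightarrow> 'b list \<Rightarrow> 'c2) \<Rightarrow> (('c1 \<times> 'c2) \<times> ('a list \<times> 'b list)) pmf" where
  "cipher_joint n pX pK Phi1 Phi2 = do {
      xs \<leftarrow> iid n pX; ks \<leftarrow> iid n pK;
      return_pmf ((Phi1 (map fst ks) (map fst xs), Phi2 (map snd ks) (map snd xs)),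
                  (map fst xs, map snd xs)) }"

definition err_prob ::
  "nat \<Rightarrow> ('a \<times> 'b) pmf \<Rightarrow> ('a list \<Rightarrow> 'm1) \<Rightarrow> ('b list \<Rightarrow> 'm2)
     \<Rightarrow> ('m1 \<Rightarrow> 'm2 \<Rightarrow> 'a list \<times> 'b list) \<Rightarrow> real" where
  "err_prob n pX phi1 phi2 psi =
     measure_pmf.prob (map_pmf (\<lambda>xs. (map fst xs, map snd xs)) (iid n pX))
       {(x1, x2). psi (phi1 x1) (phi2 x2) \<noteq> (x1, x2)}"

(* A distributed source encryption system at block length n. Ciphertext and message
   alphabets are finite sets of naturals (w.l.o.g., any finite set can be encoded). *)
definition is_system ::
  "nat \<Rightarrow> nat set \<Rightarrow> nat set \<Rightarrow> ('a list \<Rightarrow> 'a list \<Rightarrow> nat) \<Rightarrow> ('b list \<Rightarrow> 'b list \<Rightarrow> nat)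
     \<Rightarrow> ('a list \<Rightarrow> 'b list \<Rightarrow> nat \<Rightarrow> nat \<Rightarrow> 'a list \<times> 'b list)
     \<Rightarrow> ('a list \<Rightarrow> nat) \<Rightarrow> ('b list \<Rightarrow> nat) \<Rightarrow> (nat \<Rightarrow> nat \<Rightarrow> 'a list \<times> 'b list) \<Rightarrow> bool" where
  "is_system n C1 C2 Phi1 Phi2 Psi phi1 phi2 psi \<longleftrightarrow>
     finite C1 \<and> finite C2 \<and>
     (\<forall>k x. length k = n \<and> length x = n \<longrightarrow> Phi1 k x \<in> C1) \<and>
     (\<forall>k x. length k = n \<and> length x = n \<longrightarrow> Phi2 k x \<in> C2) \<and>
     (\<forall>k1 k2 x1 x2. length k1 = n \<and> length k2 = n \<and> length x1 = n \<and> length x2 = n \<longrightarrow>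
        Psi k1 k2 (Phi1 k1 x1) (Phi2 k2 x2) = psi (phi1 x1) (phi2 x2))"

definition reliable_secure_region ::
  "real \<Rightarrow> real \<Rightarrow> ('a \<times> 'b) pmf \<Rightarrow> ('a \<times> 'b) pmf \<Rightarrow> (real \<times> real) set" where
  "reliable_secure_region eps del pX pK = {(R1, R2).
     \<exists>(C1 :: nat \<Rightarrow> nat set) (C2 :: nat \<Rightarrow> nat set)
      (Phi1 :: nat \<Rightarrow> 'a list \<Rightarrow> 'a list \<Rightarrow> nat) (Phi2 :: nat \<Rightarrow> 'b list \<Rightarrow> 'b list \<Rightarrow> nat)
      (Psi :: nat \<Rightarrow> 'a list \<Rightarrow> 'b list \<Rightarrow> nat \<Rightarrow> nat \<Rightarrow> 'a list \<times> 'b list)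
      (phi1 :: nat \<Rightarrow> 'a list \<Rightarrow> nat) (phi2 :: nat \<Rightarrow> 'b list \<Rightarrow> nat)
      (psi :: nat \<Rightarrow> nat \<Rightarrow> nat \<Rightarrow> 'a list \<times> 'b list).
       (\<forall>n\<ge>1. is_system n (C1 n) (C2 n) (Phi1 n) (Phi2 n) (Psi n) (phi1 n) (phi2 n) (psi n)) \<and>
       (\<forall>\<gamma>>0. \<exists>n0. \<forall>n\<ge>n0. n \<ge> 1 \<longrightarrow>
          log 2 (real (card (C1 n))) / real n \<le> R1 + \<gamma> \<and>
          log 2 (real (card (C2 n))) / real n \<le> R2 + \<gamma> \<and>
          err_prob n pX (phi1 n) (phi2 n) (psi n) \<le> eps \<and>
          mutinf (cipher_joint n pX pK (Phi1 n) (Phi2 n)) \<le> del)}"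

definition R_sw :: "('a \<times> 'b) pmf \<Rightarrow> (real \<times> real) set" where
  "R_sw pX = {(R1, R2).
     R1 \<ge> ent pX - ent (map_pmf snd pX) \<and>
     R2 \<ge> ent pX - ent (map_pmf fst pX) \<and>
     R1 + R2 \<ge> ent pX}"

definition R_key :: "('a \<times> 'b) pmf \<Rightarrow> (real \<times> real) set" where
  "R_key pK = {(R1, R2).
     R1 \<le> ent (map_pmf fst pK) \<and> R2 \<le> ent (map_pmf snd pK) \<and> R1 + R2 \<le> ent pK}"

definition R_out :: "('a \<times> 'b) pmf \<Rightarrow> ('a \<times> 'b) pmf \<Rightarrow> (real \<times> real) set" where
  "R_out pX pK = (if R_key pK \<inter> R_sw pX \<noteq> {} then R_sw pX else {})"

end

theory Submission
  imports Defs
begin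


definition Lst :: "nat \<Rightarrow> 'z list set" where "Lst n = {zs. length zs = n}"

lemma finite_Lst: "finite (Lst n :: ('z::finite) list set)"
  using finite_lists_length_eq[of "UNIV :: 'z set" n] by (simp add: Lst_def)

lemma Lst_Suc_sum:
  fixes F :: "('z::finite) list \<Rightarrow> 'r::comm_monoid_add"
  shows "(\<Sum>zs\<in>Lst (Suc n). F zs) = (\<Sum>z\<in>UNIV. \<Sum>zs\<in>Lst n. F (z#zs))"
proof -
  have e: "Lst (Suc n) = (\<lambda>(z,zs). z#zs) ` (UNIV \<times> Lst n)"
    by (auto simp: Lst_def image_iff length_Suc_conv)
  have i: "inj_on (\<lambda>(z,zs). z#zs) (UNIV \<times> (Lst n :: 'z list set))"
    by (auto simp: inj_on_def)
  have "sum F ((\<lambda>(z,zs). z#zs) ` (UNIV \<times> Lst n)) = (\<Sum>(z,zs)\<in>UNIV \<times> Lst n. F (z#zs))"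
    by (subst sum.reindex[OF i]) (simp add: comp_def case_prod_beta)
  then show ?thesis unfolding e by (simp add: sum.cartesian_product)
qed

lemma sum_Lst_prod:
  fixes f :: "'z::finite \<Rightarrow> real"
  shows "(\<Sum>zs\<in>Lst n. prod_list (map f zs)) = (sum f UNIV)^n"
proof (induction n)
  case 0
  have "Lst 0 = {[] :: 'z list}" by (auto simp: Lst_def)
  then show ?case by simp
next
  case (Suc n)
  show ?case by (simp add: Lst_Suc_sum sum_distrib_right[symmetric] sum_distrib_left[symmetric] Suc)
qed

lemma iid_Suc_pair: "iid (Suc n) P = map_pmf (\<lambda>(x,xs). x#xs) (pair_pmf P (iid n P))"
  by (simp add: pair_pmf_def map_pmf_def bind_assoc_pmf bind_return_pmf)

lemma pmf_iid: "pmf (iid n P) zs = (if length zs = n then prod_list (map (pmf P) zs) else 0)"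
proof (induction n arbitrary: zs)
  case 0
  then show ?case by (cases zs) auto
next
  case (Suc n)
  have inj: "inj (\<lambda>(x::'a,xs). x#xs)" by (auto simp: inj_def)
  show ?case
  proof (cases zs)
    case Nil
    have "[] \<notin> set_pmf (iid (Suc n) P)" by (simp only: iid_Suc_pair set_map_pmf) auto
    then show ?thesis using Nil by (simp del: iid.simps add: set_pmf_iff)
  next
    case (Cons z zs')
    have "pmf (iid (Suc n) P) zs = pmf (pair_pmf P (iid n P)) (z, zs')"
      unfolding iid_Suc_pair Cons using pmf_map_inj'[OF inj, of _ "(z,zs')"] by simp
    then show ?thesis using Suc[of zs'] Cons by (simp add: pmf_pair)
  qed
qed

lemma set_pmf_iid: "set_pmf (iid n P) \<subseteq> Lst n"
  by (auto simp: set_pmf_iff pmf_iid Lst_def split: if_splits)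

lemma prob_iid:
  fixes P :: "('z::finite) pmf"
  shows "measure_pmf.prob (iid n P) S = (\<Sum>zs\<in>Lst n \<inter> S. prod_list (map (pmf P) zs))"
proof -
  have "measure_pmf.prob (iid n P) S = measure_pmf.prob (iid n P) (S \<inter> set_pmf (iid n P))"
    by (simp add: measure_Int_set_pmf)
  also have "S \<inter> set_pmf (iid n P) = (Lst n \<inter> S) \<inter> set_pmf (iid n P)" using set_pmf_iid by blast
  also have "measure_pmf.prob (iid n P) \<dots> = measure_pmf.prob (iid n P) (Lst n \<inter> S)"
    by (simp add: measure_Int_set_pmf)
  also have "\<dots> = (\<Sum>zs\<in>Lst n \<inter> S. pmf (iid n P) zs)"
    by (rule measure_measure_pmf_finite) (use finite_Lst in auto)
  also have "\<dots> = (\<Sum>zs\<in>Lst n \<inter> S. prod_list (map (pmf P) zs))"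
    by (rule sum.cong) (auto simp: pmf_iid Lst_def)
  finally show ?thesis .
qed



lemma prod_list_nonneg': "(\<forall>z. (g z::real) \<ge> 0) \<Longrightarrow> prod_list (map g zs) \<ge> 0"
  by (induction zs) auto

lemma prod_list_powr:
  assumes "\<forall>z. (g z::real) \<ge> 0"
  shows "prod_list (map (\<lambda>z. g z powr t) zs) = prod_list (map g zs) powr t"
proof (induction zs)
  case Nil then show ?case by simp
next
  case (Cons z zs)
  then show ?case using assms prod_list_nonneg'[OF assms, of zs] by (simp add: powr_mult)
qed

lemma chern_bound:
  fixes P :: "('z::finite) pmf" and g :: "'z \<Rightarrow> real"
  assumes g0: "\<forall>z. g z \<ge> 0"
    and A: "\<And>zs. zs \<in> A \<Longrightarrow> (\<forall>z\<in>set zs. pmf P z > 0) \<Longrightarrow> prod_list (map g zs) powr t \<ge> 1"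
  shows "measure_pmf.prob (iid n P) A \<le> (\<Sum>z\<in>UNIV. pmf P z * g z powr t) ^ n"
proof -
  have "measure_pmf.prob (iid n P) A = (\<Sum>zs\<in>Lst n \<inter> A. prod_list (map (pmf P) zs))"
    by (rule prob_iid)
  also have "\<dots> \<le> (\<Sum>zs\<in>Lst n \<inter> A. prod_list (map (pmf P) zs) * prod_list (map g zs) powr t)"
  proof (rule sum_mono)
    fix zs assume zs: "zs \<in> Lst n \<inter> A"
    have nn: "prod_list (map (pmf P) zs) \<ge> 0" by (rule prod_list_nonneg') simp
    show "prod_list (map (pmf P) zs) \<le> prod_list (map (pmf P) zs) * prod_list (map g zs) powr t"
    proof (cases "\<forall>z\<in>set zs. pmf P z > 0")
      case True
      then have "prod_list (map g zs) powr t \<ge> 1" using A zs by blast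
      then show ?thesis using nn mult_left_mono[of 1 _ "prod_list (map (pmf P) zs)"] by simp
    next
      case False
      then obtain z where "z \<in> set zs" "pmf P z = 0" using pmf_nonneg
        by (metis less_eq_real_def)
      then have "prod_list (map (pmf P) zs) = 0" by (simp add: prod_list_zero_iff)
      then show ?thesis by simp
    qed
  qed
  also have "\<dots> \<le> (\<Sum>zs\<in>Lst n. prod_list (map (pmf P) zs) * prod_list (map g zs) powr t)"
    by (rule sum_mono2) (auto simp: finite_Lst intro!: mult_nonneg_nonneg prod_list_nonneg')
  also have "\<dots> = (\<Sum>zs\<in>Lst n. prod_list (map (\<lambda>z. pmf P z * g z powr t) zs))"
  proof (rule sum.cong)
    fix zs :: "'z list"
    show "prod_list (map (pmf P) zs) * prod_list (map g zs) powr t =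
          prod_list (map (\<lambda>z. pmf P z * g z powr t) zs)"
      by (induction zs) (auto simp: powr_mult g0 prod_list_nonneg'[OF g0] prod_list_powr[OF g0, symmetric])
  qed simp
  also have "\<dots> = (\<Sum>z\<in>UNIV. pmf P z * g z powr t) ^ n" by (rule sum_Lst_prod)
  finally show ?thesis .
qed

definition mgf :: "'z pmf \<Rightarrow> ('z \<Rightarrow> real) \<Rightarrow> real \<Rightarrow> real" where
  "mgf P g t = (\<Sum>z\<in>UNIV. pmf P z * g z powr t)"

lemma mgf_0:
  fixes P :: "('z::finite) pmf"
  assumes gpos: "\<forall>z. pmf P z > 0 \<longrightarrow> g z > 0"
  shows "mgf P g 0 = 1"
proof -
  have "mgf P g 0 = (\<Sum>z\<in>UNIV. pmf P z)"
    unfolding mgf_def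
  proof (rule sum.cong)
    fix z show "pmf P z * g z powr 0 = pmf P z"
      using gpos[rule_format, of z] pmf_nonneg[of P z] by (cases "pmf P z = 0") auto
  qed simp
  also have "\<dots> = 1" by (rule sum_pmf_eq_1) auto
  finally show ?thesis .
qed

lemma mgf_deriv:
  fixes P :: "('z::finite) pmf"
  assumes gpos: "\<forall>z. pmf P z > 0 \<longrightarrow> g z > 0"
  shows "DERIV (mgf P g) 0 :> (\<Sum>z\<in>UNIV. pmf P z * ln (g z))"
  unfolding mgf_def
proof (rule DERIV_sum)
  fix z :: 'z
  show "DERIV (\<lambda>t. pmf P z * g z powr t) 0 :> pmf P z * ln (g z)"
  proof (cases "pmf P z = 0")
    case True then show ?thesis by simp
  next
    case False
    then have gz: "g z > 0" using gpos pmf_nonneg[of P z] by (simp add: less_eq_real_def)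
    have "DERIV (\<lambda>t. g z powr t) 0 :> (g z powr 0) * (1 * ln (g z) + 0 * 0 / g z)"
      by (rule DERIV_powr[where g="\<lambda>_. g z" and f="\<lambda>t. t"]) (auto intro: gz derivative_eq_intros)
    then have "DERIV (\<lambda>t. g z powr t) 0 :> ln (g z)" using gz by simp
    then show ?thesis by (auto intro: derivative_eq_intros)
  qed
qed

lemma chern_up:
  fixes P :: "('z::finite) pmf" and g :: "'z \<Rightarrow> real"
  assumes g0: "\<forall>z. g z \<ge> 0" and gpos: "\<forall>z. pmf P z > 0 \<longrightarrow> g z > 0"
    and neg: "(\<Sum>z\<in>UNIV. pmf P z * ln (g z)) < 0"
  shows "(\<lambda>n. measure_pmf.prob (iid n P) {zs. prod_list (map g zs) \<ge> 1}) \<longlonglongrightarrow> 0"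
proof -
  obtain d where d: "d > 0" "\<forall>h>0. h < d \<longrightarrow> mgf P g 0 > mgf P g (0 + h)"
    using DERIV_neg_dec_right[OF mgf_deriv[OF gpos] neg] by blast
  define t where "t = d/2"
  have t: "t > 0" "mgf P g t < 1" using d mgf_0[OF gpos] by (auto simp: t_def)
  have m0: "mgf P g t \<ge> 0" unfolding mgf_def by (auto intro!: sum_nonneg)
  have b: "measure_pmf.prob (iid n P) {zs. prod_list (map g zs) \<ge> 1} \<le> mgf P g t ^ n" for n
    unfolding mgf_def
    by (rule chern_bound[OF g0]) (use t in \<open>auto intro: ge_one_powr_ge_zero\<close>)
  have lim: "(\<lambda>n. mgf P g t ^ n) \<longlonglongrightarrow> 0" by (rule LIMSEQ_power_zero) (use t m0 in auto)
  show ?thesis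
  proof (rule tendsto_sandwich[of "\<lambda>_. 0" _ _ "\<lambda>n. mgf P g t ^ n"])
    show "\<forall>\<^sub>F n in sequentially. 0 \<le> measure_pmf.prob (iid n P) S" for S
      by (rule always_eventually) simp
    show "\<forall>\<^sub>F n in sequentially. measure_pmf.prob (iid n P) {zs. prod_list (map g zs) \<ge> 1} \<le> mgf P g t ^ n"
      by (rule always_eventually) (use b in blast)
  qed (use lim in simp_all)
qed

lemma chern_lo:
  fixes P :: "('z::finite) pmf" and g :: "'z \<Rightarrow> real"
  assumes g0: "\<forall>z. g z \<ge> 0" and gpos: "\<forall>z. pmf P z > 0 \<longrightarrow> g z > 0"
    and pos: "(\<Sum>z\<in>UNIV. pmf P z * ln (g z)) > 0"
  shows "(\<lambda>n. measure_pmf.prob (iid n P) {zs. prod_list (map g zs) \<le> 1}) \<longlonglongrightarrow> 0"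
proof -
  obtain d where d: "d > 0" "\<forall>h>0. h < d \<longrightarrow> mgf P g (0 - h) < mgf P g 0"
    using DERIV_pos_inc_left[OF mgf_deriv[OF gpos] pos] by blast
  define t where "t = - d/2"
  have t: "t < 0" "mgf P g t < 1" using d mgf_0[OF gpos] by (auto simp: t_def)
  have m0: "mgf P g t \<ge> 0" unfolding mgf_def by (auto intro!: sum_nonneg)
  have A: "prod_list (map g zs) powr t \<ge> 1"
    if "prod_list (map g zs) \<le> 1" "\<forall>z\<in>set zs. pmf P z > 0" for zs
  proof -
    have "prod_list (map g zs) > 0" using that(2) gpos by (induction zs) auto
    then have "ln (prod_list (map g zs)) \<le> 0" using that(1) by simp
    then have "t * ln (prod_list (map g zs)) \<ge> 0" using t by (simp add: mult_nonpos_nonpos)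
    then show ?thesis using \<open>prod_list (map g zs) > 0\<close> by (simp add: powr_def)
  qed
  have b: "measure_pmf.prob (iid n P) {zs. prod_list (map g zs) \<le> 1} \<le> mgf P g t ^ n" for n
    unfolding mgf_def by (rule chern_bound[OF g0]) (use A in auto)
  have lim: "(\<lambda>n. mgf P g t ^ n) \<longlonglongrightarrow> 0" by (rule LIMSEQ_power_zero) (use t m0 in auto)
  show ?thesis
  proof (rule tendsto_sandwich[of "\<lambda>_. 0" _ _ "\<lambda>n. mgf P g t ^ n"])
    show "\<forall>\<^sub>F n in sequentially. 0 \<le> measure_pmf.prob (iid n P) S" for S
      by (rule always_eventually) simp
    show "\<forall>\<^sub>F n in sequentially. measure_pmf.prob (iid n P) {zs. prod_list (map g zs) \<le> 1} \<le> mgf P g t ^ n"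
      by (rule always_eventually) (use b in blast)
  qed (use lim in simp_all)
qed



lemma ln_ge_1_minus_inv: "x > 0 \<Longrightarrow> ln (x::real) \<ge> 1 - 1/x"
  using ln_le_minus_one[of "1/x"] by (simp add: ln_div)

lemma log_sum_ln:
  fixes a b :: "'i \<Rightarrow> real"
  assumes S: "finite S" "S \<noteq> {}" and ab: "\<forall>i\<in>S. a i > 0 \<and> b i > 0"
  shows "(\<Sum>i\<in>S. a i * ln (a i / b i)) \<ge> (\<Sum>i\<in>S. a i) * ln ((\<Sum>i\<in>S. a i) / (\<Sum>i\<in>S. b i))"
proof -
  define A where "A = (\<Sum>i\<in>S. a i)"
  define B where "B = (\<Sum>i\<in>S. b i)"
  have A: "A > 0" unfolding A_def using S ab by (intro sum_pos) auto
  have B: "B > 0" unfolding B_def using S ab by (intro sum_pos) auto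
  have t: "a i * ln (a i / b i) - a i * ln (A / B) \<ge> a i - b i * (A / B)" if i: "i \<in> S" for i
  proof -
    have ai: "a i > 0" and bi: "b i > 0" using ab i by auto
    define x where "x = (a i * B) / (b i * A)"
    have x: "x > 0" unfolding x_def using ai bi A B by simp
    have lx: "ln x = ln (a i / b i) - ln (A / B)"
      unfolding x_def using ai bi A B by (simp add: ln_div ln_mult)
    have "a i * ln x \<ge> a i * (1 - 1/x)"
      using ln_ge_1_minus_inv[OF x] ai by (simp add: mult_left_mono)
    also have "a i * (1 - 1/x) = a i - b i * (A / B)"
      unfolding x_def using ai bi A B by (simp add: field_simps)
    finally show ?thesis using lx by (simp add: right_diff_distrib)
  qed
  have "(\<Sum>i\<in>S. a i * ln (a i / b i)) - A * ln (A / B) = (\<Sum>i\<in>S. a i * ln (a i / b i) - a i * ln (A / B))"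
    by (simp add: sum_subtractf A_def sum_distrib_right)
  also have "\<dots> \<ge> (\<Sum>i\<in>S. a i - b i * (A / B))" by (rule sum_mono) (use t in auto)
  also have "(\<Sum>i\<in>S. a i - b i * (A / B)) = A - B * (A / B)"
  proof -
    have "(\<Sum>i\<in>S. b i * (A / B)) = B * (A / B)" unfolding B_def by (rule sum_distrib_right[symmetric])
    then show ?thesis unfolding sum_subtractf A_def by simp
  qed
  also have "\<dots> = 0" using B by simp
  finally show ?thesis unfolding A_def B_def by simp
qed

lemma log_sum:
  fixes a b :: "'i \<Rightarrow> real"
  assumes S: "finite S" and ab: "\<forall>i\<in>S. a i > 0 \<and> b i > 0"
  shows "(\<Sum>i\<in>S. a i * log 2 (a i / b i)) \<ge> (\<Sum>i\<in>S. a i) * log 2 ((\<Sum>i\<in>S. a i) / (\<Sum>i\<in>S. b i))"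
proof (cases "S = {}")
  case True then show ?thesis by simp
next
  case False
  have "(\<Sum>i\<in>S. a i) * ln ((\<Sum>i\<in>S. a i) / (\<Sum>i\<in>S. b i)) / ln 2
        \<le> (\<Sum>i\<in>S. a i * ln (a i / b i)) / ln 2"
    by (rule divide_right_mono[OF log_sum_ln[OF S False ab]]) simp
  then show ?thesis by (simp add: log_def sum_divide_distrib)
qed

lemma xlogx_ge: "0 \<le> x \<Longrightarrow> x * log 2 (x::real) \<ge> -2"
proof (cases "x = 0")
  case False
  assume "0 \<le> x"
  then have x: "x > 0" using False by simp
  have "x * ln x \<ge> x * (1 - 1/x)" using ln_ge_1_minus_inv[OF x] x by (simp add: mult_left_mono)
  moreover have "x * (1 - 1/x) = x - 1" using x by (simp add: field_simps)
  ultimately have a: "x * ln x \<ge> x - 1" by simp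
  have l2: "ln (2::real) \<ge> 1/2" using ln_ge_1_minus_inv[of 2] by simp
  show ?thesis
  proof (cases "x \<le> 1")
    case True
    have m1: "x * ln x \<ge> -1" using a x by simp
    have "x * ln x / ln 2 \<ge> -1 / ln 2" using divide_right_mono[OF m1, of "ln 2"] by simp
    moreover have "-1 / ln 2 \<ge> (-2::real)" using l2 by (simp add: field_simps)
    ultimately show ?thesis by (simp add: log_def)
  next
    case False
    then have "ln x \<ge> 0" by simp
    then have "x * ln x \<ge> 0" using x by simp
    then have "x * ln x / ln 2 \<ge> 0" by simp
    then show ?thesis by (simp add: log_def)
  qed
qed simp

lemma pmf_map_fst_ge: "pmf (map_pmf fst J) (fst z) \<ge> pmf J z"
proof -
  have "measure_pmf.prob J {z} \<le> measure_pmf.prob J (fst -` {fst z})"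
    by (rule measure_pmf.finite_measure_mono) auto
  then show ?thesis unfolding pmf_map by (simp add: measure_pmf_single)
qed

lemma pmf_map_snd_ge: "pmf (map_pmf snd J) (snd z) \<ge> pmf J z"
proof -
  have "measure_pmf.prob J {z} \<le> measure_pmf.prob J (snd -` {snd z})"
    by (rule measure_pmf.finite_measure_mono) auto
  then show ?thesis unfolding pmf_map by (simp add: measure_pmf_single)
qed

lemma set_pmf_sub_marg: "set_pmf J \<subseteq> set_pmf (map_pmf fst J) \<times> set_pmf (map_pmf snd J)"
proof
  fix z assume "z \<in> set_pmf J"
  then show "z \<in> set_pmf (map_pmf fst J) \<times> set_pmf (map_pmf snd J)" by (simp add: mem_Times_iff imageI)
qed

lemma mi_lower:
  fixes J :: "('u \<times> 'v) pmf"
  assumes fin: "finite (set_pmf J)" and Q0: "Q0 > 0"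
    and q: "(\<Sum>z\<in>set_pmf J \<inter> T. pmf (map_pmf fst J) (fst z) * pmf (map_pmf snd J) (snd z)) \<le> Q0"
  shows "mutinf J \<ge> measure_pmf.prob J T * log 2 (1 / Q0) - 4"
proof -
  let ?S = "set_pmf J"
  let ?Q = "\<lambda>z. pmf (map_pmf fst J) (fst z) * pmf (map_pmf snd J) (snd z)"
  let ?f = "\<lambda>z. pmf J z * log 2 (pmf J z / ?Q z)"
  have pos: "\<forall>z\<in>U. pmf J z > 0 \<and> ?Q z > 0" if "U \<subseteq> ?S" for U
  proof
    fix z assume "z \<in> U"
    then have "pmf J z > 0" using that by (auto simp: set_pmf_iff less_eq_real_def)
    then show "pmf J z > 0 \<and> ?Q z > 0"
      using pmf_map_fst_ge[of J z] pmf_map_snd_ge[of J z] by (auto intro!: mult_pos_pos)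
  qed
  have QS: "(\<Sum>z\<in>?S. ?Q z) \<le> 1"
  proof -
    have sub: "?S \<subseteq> set_pmf (map_pmf fst J) \<times> set_pmf (map_pmf snd J)"
      by (rule set_pmf_sub_marg)
    have fA: "finite (set_pmf (map_pmf fst J))" "finite (set_pmf (map_pmf snd J))" using fin by auto
    have "(\<Sum>z\<in>?S. ?Q z) \<le> (\<Sum>z\<in>set_pmf (map_pmf fst J) \<times> set_pmf (map_pmf snd J). ?Q z)"
      by (rule sum_mono2) (use sub fA in auto)
    also have "\<dots> = (\<Sum>a\<in>set_pmf (map_pmf fst J). pmf (map_pmf fst J) a) * (\<Sum>b\<in>set_pmf (map_pmf snd J). pmf (map_pmf snd J) b)"
      by (simp add: sum_product sum.cartesian_product case_prod_beta)
    also have "\<dots> = 1" using fA by (simp add: sum_pmf_eq_1)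
    finally show ?thesis .
  qed
  define p where "p = measure_pmf.prob J T"
  have p_eq: "p = (\<Sum>z\<in>?S \<inter> T. pmf J z)"
  proof -
    have "p = measure_pmf.prob J (T \<inter> ?S)" unfolding p_def by (simp add: measure_Int_set_pmf)
    also have "\<dots> = (\<Sum>z\<in>?S \<inter> T. pmf J z)"
      by (subst measure_measure_pmf_finite) (use fin in \<open>auto simp: Int_commute\<close>)
    finally show ?thesis .
  qed
  have p1_eq: "1 - p = (\<Sum>z\<in>?S - T. pmf J z)"
  proof -
    have "(\<Sum>z\<in>?S. pmf J z) = 1" by (rule sum_pmf_eq_1) (use fin in auto)
    moreover have "(\<Sum>z\<in>?S. pmf J z) = (\<Sum>z\<in>?S \<inter> T. pmf J z) + (\<Sum>z\<in>?S - T. pmf J z)"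
      by (rule sum.Int_Diff[OF fin])
    ultimately show ?thesis using p_eq by simp
  qed
  have p01: "0 \<le> p" "p \<le> 1" unfolding p_def by auto
  have part1: "(\<Sum>z\<in>?S \<inter> T. ?f z) \<ge> p * log 2 (1 / Q0) - 2"
  proof (cases "?S \<inter> T = {}")
    case True
    then have "p = 0" using p_eq by simp
    then show ?thesis using True by simp
  next
    case ne: False
    define q where "q = (\<Sum>z\<in>?S \<inter> T. ?Q z)"
    have ls: "(\<Sum>z\<in>?S \<inter> T. ?f z) \<ge> p * log 2 (p / q)"
      unfolding p_eq q_def by (rule log_sum) (use fin pos[of "?S \<inter> T"] in auto)
    have qpos: "q > 0" unfolding q_def using ne fin pos[of "?S \<inter> T"] by (intro sum_pos) auto
    have ppos: "p > 0" unfolding p_eq using ne fin pos[of "?S \<inter> T"] by (intro sum_pos) auto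
    have "log 2 q \<le> log 2 Q0" using qpos q Q0 unfolding q_def by simp
    then have "p * log 2 (p / q) \<ge> p * log 2 p + p * log 2 (1/Q0)"
      using ppos qpos Q0 by (simp add: log_divide right_diff_distrib mult_left_mono)
    then show ?thesis using ls xlogx_ge[of p] p01 by linarith
  qed
  have part2: "(\<Sum>z\<in>?S - T. ?f z) \<ge> -2"
  proof (cases "?S - T = {}")
    case True show ?thesis unfolding True by simp
  next
    case ne: False
    define q where "q = (\<Sum>z\<in>?S - T. ?Q z)"
    have ls: "(\<Sum>z\<in>?S - T. ?f z) \<ge> (1 - p) * log 2 ((1 - p) / q)"
      unfolding p1_eq q_def by (rule log_sum) (use fin pos[of "?S - T"] in auto)
    have qpos: "q > 0" unfolding q_def using ne fin pos[of "?S - T"] by (intro sum_pos) auto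
    have ppos: "1 - p > 0" unfolding p1_eq using ne fin pos[of "?S - T"] by (intro sum_pos) auto
    have "q \<le> (\<Sum>z\<in>?S. ?Q z)" unfolding q_def by (rule sum_mono2) (use fin in auto)
    then have "q \<le> 1" using QS by simp
    then have "log 2 q \<le> 0" using qpos by simp
    then have "(1 - p) * log 2 ((1 - p) / q) \<ge> (1 - p) * log 2 (1 - p)"
      using ppos qpos by (simp add: log_divide right_diff_distrib mult_left_mono mult_nonneg_nonpos)
    then show ?thesis using ls xlogx_ge[of "1 - p"] ppos by linarith
  qed
  have "mutinf J = (\<Sum>z\<in>?S \<inter> T. ?f z) + (\<Sum>z\<in>?S - T. ?f z)"
    unfolding mutinf_def by (rule sum.Int_Diff[OF fin])
  then show ?thesis using part1 part2 unfolding p_def by linarith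
qed

lemma mi_nonneg:
  fixes J :: "('u \<times> 'v) pmf"
  assumes fin: "finite (set_pmf J)"
  shows "mutinf J \<ge> 0"
proof -
  let ?S = "set_pmf J"
  let ?Q = "\<lambda>z. pmf (map_pmf fst J) (fst z) * pmf (map_pmf snd J) (snd z)"
  have pos: "\<forall>z\<in>?S. pmf J z > 0 \<and> ?Q z > 0"
  proof
    fix z assume "z \<in> ?S"
    then have "pmf J z > 0" by (auto simp: set_pmf_iff less_eq_real_def)
    then show "pmf J z > 0 \<and> ?Q z > 0"
      using pmf_map_fst_ge[of J z] pmf_map_snd_ge[of J z] by (auto intro!: mult_pos_pos)
  qed
  have QS: "(\<Sum>z\<in>?S. ?Q z) \<le> 1"
  proof -
    have sub: "?S \<subseteq> set_pmf (map_pmf fst J) \<times> set_pmf (map_pmf snd J)"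
      by (rule set_pmf_sub_marg)
    have fA: "finite (set_pmf (map_pmf fst J))" "finite (set_pmf (map_pmf snd J))" using fin by auto
    have "(\<Sum>z\<in>?S. ?Q z) \<le> (\<Sum>z\<in>set_pmf (map_pmf fst J) \<times> set_pmf (map_pmf snd J). ?Q z)"
      by (rule sum_mono2) (use sub fA in auto)
    also have "\<dots> = (\<Sum>a\<in>set_pmf (map_pmf fst J). pmf (map_pmf fst J) a) * (\<Sum>b\<in>set_pmf (map_pmf snd J). pmf (map_pmf snd J) b)"
      by (simp add: sum_product sum.cartesian_product case_prod_beta)
    also have "\<dots> = 1" using fA by (simp add: sum_pmf_eq_1)
    finally show ?thesis .
  qed
  have one: "(\<Sum>z\<in>?S. pmf J z) = 1" by (rule sum_pmf_eq_1) (use fin in auto)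
  have ne: "?S \<noteq> {}" by (rule set_pmf_not_empty)
  have qpos: "(\<Sum>z\<in>?S. ?Q z) > 0" using ne fin pos by (intro sum_pos) auto
  have "mutinf J \<ge> 1 * log 2 (1 / (\<Sum>z\<in>?S. ?Q z))"
    unfolding mutinf_def using log_sum[OF fin pos] one by simp
  moreover have "log 2 (1 / (\<Sum>z\<in>?S. ?Q z)) \<ge> 0" using qpos QS by simp
  ultimately show ?thesis by simp
qed



lemma ent_UNIV: "ent (P :: ('z::finite) pmf) = -(\<Sum>x\<in>UNIV. pmf P x * log 2 (pmf P x))"
  unfolding ent_def
  by (subst sum.mono_neutral_left[of UNIV "set_pmf P"]) (auto simp: set_pmf_iff)

lemma pmf_fst_sum: "pmf (map_pmf fst (P :: ('a::finite \<times> 'b::finite) pmf)) a = (\<Sum>b\<in>UNIV. pmf P (a,b))"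
proof -
  have e: "fst -` {a} = Pair a ` (UNIV :: 'b set)" by auto
  have "pmf (map_pmf fst P) a = measure_pmf.prob P (Pair a ` UNIV)" by (simp add: pmf_map e)
  also have "\<dots> = (\<Sum>x\<in>Pair a ` UNIV. pmf P x)" by (rule measure_measure_pmf_finite) simp
  also have "\<dots> = (\<Sum>b\<in>UNIV. pmf P (a,b))" by (subst sum.reindex) (auto simp: inj_on_def)
  finally show ?thesis .
qed

lemma pmf_snd_sum: "pmf (map_pmf snd (P :: ('a::finite \<times> 'b::finite) pmf)) b = (\<Sum>a\<in>UNIV. pmf P (a,b))"
proof -
  have e: "snd -` {b} = (\<lambda>a. (a,b)) ` (UNIV :: 'a set)" by auto
  have "pmf (map_pmf snd P) b = measure_pmf.prob P ((\<lambda>a. (a,b)) ` UNIV)" by (simp add: pmf_map e)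
  also have "\<dots> = (\<Sum>x\<in>(\<lambda>a. (a,b)) ` UNIV. pmf P x)" by (rule measure_measure_pmf_finite) simp
  also have "\<dots> = (\<Sum>a\<in>UNIV. pmf P (a,b))" by (subst sum.reindex) (auto simp: inj_on_def)
  finally show ?thesis .
qed

lemma sum_fst_marg:
  fixes P :: "('a::finite \<times> 'b::finite) pmf"
  shows "(\<Sum>z\<in>UNIV. pmf P z * f (fst z)) = (\<Sum>a\<in>UNIV. pmf (map_pmf fst P) a * f a)"
proof -
  have "(\<Sum>a\<in>UNIV. pmf (map_pmf fst P) a * f a) = (\<Sum>a\<in>UNIV. \<Sum>b\<in>UNIV. pmf P (a,b) * f a)"
    by (simp add: pmf_fst_sum sum_distrib_right)
  also have "\<dots> = (\<Sum>z\<in>UNIV \<times> UNIV. pmf P z * f (fst z))"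
    by (simp add: sum.cartesian_product case_prod_beta)
  finally show ?thesis by (simp add: UNIV_Times_UNIV)
qed

lemma sum_snd_marg:
  fixes P :: "('a::finite \<times> 'b::finite) pmf"
  shows "(\<Sum>z\<in>UNIV. pmf P z * f (snd z)) = (\<Sum>b\<in>UNIV. pmf (map_pmf snd P) b * f b)"
proof -
  have "(\<Sum>b\<in>UNIV. pmf (map_pmf snd P) b * f b) = (\<Sum>b\<in>UNIV. \<Sum>a\<in>UNIV. pmf P (a,b) * f b)"
    by (simp add: pmf_snd_sum sum_distrib_right)
  also have "\<dots> = (\<Sum>a\<in>UNIV. \<Sum>b\<in>UNIV. pmf P (a,b) * f b)" by (rule sum.swap)
  also have "\<dots> = (\<Sum>z\<in>UNIV \<times> UNIV. pmf P z * f (snd z))"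
    by (simp add: sum.cartesian_product case_prod_beta)
  finally show ?thesis by (simp add: UNIV_Times_UNIV)
qed

lemma ent_fst_as: "ent (map_pmf fst (P :: ('a::finite \<times> 'b::finite) pmf)) =
   -(\<Sum>z\<in>UNIV. pmf P z * log 2 (pmf (map_pmf fst P) (fst z)))"
  by (simp add: ent_UNIV sum_fst_marg[of P "\<lambda>a. log 2 (pmf (map_pmf fst P) a)"])

lemma ent_snd_as: "ent (map_pmf snd (P :: ('a::finite \<times> 'b::finite) pmf)) =
   -(\<Sum>z\<in>UNIV. pmf P z * log 2 (pmf (map_pmf snd P) (snd z)))"
  by (simp add: ent_UNIV sum_snd_marg[of P "\<lambda>b. log 2 (pmf (map_pmf snd P) b)"])

lemma cond2_ent:
  fixes P :: "('a::finite \<times> 'b::finite) pmf"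
  shows "-(\<Sum>z\<in>UNIV. pmf P z * log 2 (pmf P z / pmf (map_pmf snd P) (snd z))) = ent P - ent (map_pmf snd P)"
proof -
  have "(\<Sum>z\<in>UNIV. pmf P z * log 2 (pmf P z / pmf (map_pmf snd P) (snd z))) =
        (\<Sum>z\<in>UNIV. pmf P z * log 2 (pmf P z) - pmf P z * log 2 (pmf (map_pmf snd P) (snd z)))"
  proof (rule sum.cong)
    fix z
    show "pmf P z * log 2 (pmf P z / pmf (map_pmf snd P) (snd z)) =
          pmf P z * log 2 (pmf P z) - pmf P z * log 2 (pmf (map_pmf snd P) (snd z))"
    proof (cases "pmf P z = 0")
      case False
      then have "pmf P z > 0" using pmf_nonneg[of P z] by linarith
      moreover then have "pmf (map_pmf snd P) (snd z) > 0" using pmf_map_snd_ge[of P z] by linarith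
      ultimately show ?thesis by (simp add: log_divide right_diff_distrib)
    qed simp
  qed simp
  then show ?thesis by (simp add: sum_subtractf ent_UNIV[of P] ent_snd_as)
qed

lemma cond1_ent:
  fixes P :: "('a::finite \<times> 'b::finite) pmf"
  shows "-(\<Sum>z\<in>UNIV. pmf P z * log 2 (pmf P z / pmf (map_pmf fst P) (fst z))) = ent P - ent (map_pmf fst P)"
proof -
  have "(\<Sum>z\<in>UNIV. pmf P z * log 2 (pmf P z / pmf (map_pmf fst P) (fst z))) =
        (\<Sum>z\<in>UNIV. pmf P z * log 2 (pmf P z) - pmf P z * log 2 (pmf (map_pmf fst P) (fst z)))"
  proof (rule sum.cong)
    fix z
    show "pmf P z * log 2 (pmf P z / pmf (map_pmf fst P) (fst z)) =
          pmf P z * log 2 (pmf P z) - pmf P z * log 2 (pmf (map_pmf fst P) (fst z))"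
    proof (cases "pmf P z = 0")
      case False
      then have "pmf P z > 0" using pmf_nonneg[of P z] by linarith
      moreover then have "pmf (map_pmf fst P) (fst z) > 0" using pmf_map_fst_ge[of P z] by linarith
      ultimately show ?thesis by (simp add: log_divide right_diff_distrib)
    qed simp
  qed simp
  then show ?thesis by (simp add: sum_subtractf ent_UNIV[of P] ent_fst_as)
qed

lemma ent_subadd:
  fixes P :: "('a::finite \<times> 'b::finite) pmf"
  shows "ent P \<le> ent (map_pmf fst P) + ent (map_pmf snd P)"
proof -
  have fin: "finite (set_pmf P)" by simp
  have "mutinf P = (\<Sum>z\<in>UNIV. pmf P z * log 2 (pmf P z / (pmf (map_pmf fst P) (fst z) * pmf (map_pmf snd P) (snd z))))"
    unfolding mutinf_def by (subst sum.mono_neutral_left[of UNIV "set_pmf P"]) (auto simp: set_pmf_iff)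
  also have "\<dots> = (\<Sum>z\<in>UNIV. pmf P z * log 2 (pmf P z) - pmf P z * log 2 (pmf (map_pmf fst P) (fst z))
                   - pmf P z * log 2 (pmf (map_pmf snd P) (snd z)))"
  proof (rule sum.cong)
    fix z
    show "pmf P z * log 2 (pmf P z / (pmf (map_pmf fst P) (fst z) * pmf (map_pmf snd P) (snd z))) =
          pmf P z * log 2 (pmf P z) - pmf P z * log 2 (pmf (map_pmf fst P) (fst z))
                   - pmf P z * log 2 (pmf (map_pmf snd P) (snd z))"
    proof (cases "pmf P z = 0")
      case False
      then have a: "pmf P z > 0" using pmf_nonneg[of P z] by linarith
      then have "pmf (map_pmf fst P) (fst z) > 0" "pmf (map_pmf snd P) (snd z) > 0"
        using pmf_map_fst_ge[of P z] pmf_map_snd_ge[of P z] by linarith+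
      then show ?thesis using a by (simp add: log_divide log_mult algebra_simps)
    qed simp
  qed simp
  also have "\<dots> = - ent P + ent (map_pmf fst P) + ent (map_pmf snd P)"
    by (simp add: sum_subtractf ent_UNIV[of P] ent_fst_as ent_snd_as)
  finally show ?thesis using mi_nonneg[OF fin] by simp
qed

lemma sum_ln_shift:
  fixes P :: "('z::finite) pmf"
  assumes gpos: "\<forall>z. pmf P z > 0 \<longrightarrow> g z > 0"
  shows "(\<Sum>z\<in>UNIV. pmf P z * ln (g z * 2 powr c)) = (c - (-(\<Sum>z\<in>UNIV. pmf P z * log 2 (g z)))) * ln 2"
proof -
  have "(\<Sum>z\<in>UNIV. pmf P z * ln (g z * 2 powr c)) = (\<Sum>z\<in>UNIV. pmf P z * log 2 (g z) * ln 2 + c * ln 2 * pmf P z)"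
  proof (rule sum.cong)
    fix z show "pmf P z * ln (g z * 2 powr c) = pmf P z * log 2 (g z) * ln 2 + c * ln 2 * pmf P z"
    proof (cases "pmf P z = 0")
      case False
      then have "g z > 0" using gpos pmf_nonneg[of P z] by (simp add: less_eq_real_def)
      then show ?thesis by (simp add: ln_mult log_def algebra_simps)
    qed simp
  qed simp
  also have "\<dots> = (\<Sum>z\<in>UNIV. pmf P z * log 2 (g z)) * ln 2 + c * ln 2 * (\<Sum>z\<in>UNIV. pmf P z)"
    by (simp add: sum.distrib sum_distrib_left sum_distrib_right)
  also have "(\<Sum>z\<in>UNIV. pmf P z) = 1" by (rule sum_pmf_eq_1) auto
  finally show ?thesis by (simp add: algebra_simps)
qed

lemma prod_list_shift:
  fixes c :: real and g :: "'z \<Rightarrow> real"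
  shows "prod_list (map (\<lambda>z. g z * 2 powr c) zs) = prod_list (map g zs) * 2 powr (c * real (length zs))"
  by (induction zs) (auto simp: powr_add algebra_simps)



lemma prod_list_fac:
  assumes "\<forall>z. pmf P z = w z * g z"
  shows "prod_list (map (pmf P) zs) = prod_list (map w zs) * (prod_list (map g zs) :: real)"
  using assms by (induction zs) (auto simp: algebra_simps)

lemma src_bound:
  fixes P :: "('z::finite) pmf"
  assumes fac: "\<forall>z. pmf P z = w z * g z" and w0: "\<forall>z. w z \<ge> 0" and g0: "\<forall>z. g z \<ge> 0"
    and U: "\<forall>zs \<in> Lst n \<inter> U. prod_list (map g zs) \<le> \<sigma>"
  shows "measure_pmf.prob (iid n P) U \<le> \<sigma> * (\<Sum>zs\<in>Lst n \<inter> U. prod_list (map w zs))"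
proof -
  have "measure_pmf.prob (iid n P) U = (\<Sum>zs\<in>Lst n \<inter> U. prod_list (map (pmf P) zs))" by (rule prob_iid)
  also have "\<dots> \<le> (\<Sum>zs\<in>Lst n \<inter> U. \<sigma> * prod_list (map w zs))"
  proof (rule sum_mono)
    fix zs assume zs: "zs \<in> Lst n \<inter> U"
    have "prod_list (map w zs) * prod_list (map g zs) \<le> prod_list (map w zs) * \<sigma>"
      using U zs prod_list_nonneg'[OF w0] by (simp add: mult_left_mono)
    then show "prod_list (map (pmf P) zs) \<le> \<sigma> * prod_list (map w zs)"
      using prod_list_fac[OF fac] by (simp add: mult.commute)
  qed
  also have "\<dots> = \<sigma> * (\<Sum>zs\<in>Lst n \<inter> U. prod_list (map w zs))" by (simp add: sum_distrib_left)
  finally show ?thesis .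
qed

lemma powr_n: "(2::real) powr (real n * c) = (2 powr c) ^ n"
  by (simp add: powr_realpow[symmetric] powr_powr mult.commute)

lemma tendsto_2powr_neg: "c > 0 \<Longrightarrow> (\<lambda>n. (2::real) powr (real n * (- c))) \<longlonglongrightarrow> 0"
  unfolding powr_n by (rule LIMSEQ_power_zero) (simp add: powr_minus field_simps)

lemma gpos_of_fac:
  assumes fac: "\<forall>z. pmf P z = w z * g z" and w0: "\<forall>z. w z \<ge> 0" and g0: "\<forall>z. (g z::real) \<ge> 0"
  shows "\<forall>z. pmf P z > 0 \<longrightarrow> g z > 0"
proof (intro allI impI)
  fix z assume "pmf P z > 0"
  then have "g z \<noteq> 0" using fac by auto
  then show "g z > 0" using g0[rule_format, of z] by linarith
qed

lemma seq_contra: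
  assumes "\<forall>\<^sub>F n in sequentially. (b::real) \<le> a n" "a \<longlonglongrightarrow> 0" "b > 0"
  shows False
proof -
  have "\<forall>\<^sub>F n in sequentially. a n < b" using order_tendstoD(2)[OF assms(2) assms(3)] .
  then have "\<forall>\<^sub>F n in sequentially. False" using assms(1) by eventually_elim auto
  then show False by simp
qed

lemma sw_generic:
  fixes P :: "('z::finite) pmf" and D :: "nat \<Rightarrow> 'z list set" and N :: "nat \<Rightarrow> real"
  assumes eps: "\<epsilon> < 1"
    and Dp: "\<forall>\<^sub>F n in sequentially. measure_pmf.prob (iid n P) (D n) \<ge> 1 - \<epsilon>"
    and fac: "\<forall>z. pmf P z = w z * g z" and w0: "\<forall>z. w z \<ge> 0" and g0: "\<forall>z. g z \<ge> 0"
    and cnt: "\<forall>\<^sub>F n in sequentially. (\<Sum>zs\<in>Lst n \<inter> D n. prod_list (map w zs)) \<le> N n"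
    and rate: "\<forall>\<gamma>>0. \<forall>\<^sub>F n in sequentially. N n \<le> 2 powr (real n * (R + \<gamma>))"
  shows "R \<ge> -(\<Sum>z\<in>UNIV. pmf P z * log 2 (g z))"
proof (rule ccontr)
  define Hg where "Hg = -(\<Sum>z\<in>UNIV. pmf P z * log 2 (g z))"
  assume "\<not> R \<ge> -(\<Sum>z\<in>UNIV. pmf P z * log 2 (g z))"
  then have RH: "R < Hg" unfolding Hg_def by simp
  define \<eta> where "\<eta> = (Hg - R) / 3"
  have \<eta>: "\<eta> > 0" using RH by (simp add: \<eta>_def)
  define g' where "g' = (\<lambda>z. g z * 2 powr (Hg - \<eta>))"
  have gpos: "\<forall>z. pmf P z > 0 \<longrightarrow> g z > 0" by (rule gpos_of_fac[OF fac w0 g0])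
  have g'0: "\<forall>z. g' z \<ge> 0" using g0 by (simp add: g'_def)
  have g'pos: "\<forall>z. pmf P z > 0 \<longrightarrow> g' z > 0" using gpos by (simp add: g'_def)
  have "(\<Sum>z\<in>UNIV. pmf P z * ln (g' z)) = ((Hg - \<eta>) - Hg) * ln 2"
    unfolding g'_def sum_ln_shift[OF gpos] Hg_def by simp
  also have "\<dots> < 0" using \<eta> by simp
  finally have a_lim: "(\<lambda>n. measure_pmf.prob (iid n P) {zs. prod_list (map g' zs) \<ge> 1}) \<longlonglongrightarrow> 0"
    by (rule chern_up[OF g'0 g'pos])
  have b_lim: "(\<lambda>n. (2::real) powr (real n * (- \<eta>))) \<longlonglongrightarrow> 0" by (rule tendsto_2powr_neg[OF \<eta>])
  have ab_lim: "(\<lambda>n. measure_pmf.prob (iid n P) {zs. prod_list (map g' zs) \<ge> 1} + 2 powr (real n * (- \<eta>))) \<longlonglongrightarrow> 0"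
    using tendsto_add[OF a_lim b_lim] by simp
  have ev: "\<forall>\<^sub>F n in sequentially. 1 - \<epsilon> \<le> measure_pmf.prob (iid n P) {zs. prod_list (map g' zs) \<ge> 1} + 2 powr (real n * (- \<eta>))"
    using Dp cnt rate[rule_format, OF \<eta>]
  proof eventually_elim
    case (elim n)
    define \<sigma> where "\<sigma> = (2::real) powr (- ((Hg - \<eta>) * real n))"
    define A where "A = {zs. prod_list (map g' zs) \<ge> 1}"
    have sub: "D n \<subseteq> (D n - A) \<union> A" by blast
    have "measure_pmf.prob (iid n P) (D n) \<le> measure_pmf.prob (iid n P) ((D n - A) \<union> A)"
      by (rule measure_pmf.finite_measure_mono[OF sub]) simp
    also have "\<dots> \<le> measure_pmf.prob (iid n P) (D n - A) + measure_pmf.prob (iid n P) A"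
      by (rule measure_Un_le) auto
    also have "measure_pmf.prob (iid n P) (D n - A) \<le> \<sigma> * (\<Sum>zs\<in>Lst n \<inter> (D n - A). prod_list (map w zs))"
    proof (rule src_bound[OF fac w0 g0], rule ballI)
      fix zs assume zs: "zs \<in> Lst n \<inter> (D n - A)"
      then have len: "length zs = n" by (simp add: Lst_def)
      have "prod_list (map g zs) * 2 powr ((Hg - \<eta>) * real n) < 1"
        using zs len prod_list_shift[of g "Hg - \<eta>" zs] by (simp add: A_def g'_def)
      then have "prod_list (map g zs) < 1 / 2 powr ((Hg - \<eta>) * real n)"
        by (simp add: field_simps)
      then show "prod_list (map g zs) \<le> \<sigma>" by (simp add: \<sigma>_def powr_minus divide_inverse)
    qed
    also have "(\<Sum>zs\<in>Lst n \<inter> (D n - A). prod_list (map w zs)) \<le> (\<Sum>zs\<in>Lst n \<inter> D n. prod_list (map w zs))"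
      by (rule sum_mono2) (auto simp: finite_Lst prod_list_nonneg'[OF w0])
    also have "\<dots> \<le> N n" by (rule elim(2))
    also have "N n \<le> 2 powr (real n * (R + \<eta>))" by (rule elim(3))
    finally have "measure_pmf.prob (iid n P) (D n) \<le> \<sigma> * 2 powr (real n * (R + \<eta>)) + measure_pmf.prob (iid n P) A"
      by (simp add: \<sigma>_def mult_left_mono)
    also have "\<sigma> * 2 powr (real n * (R + \<eta>)) = 2 powr (real n * (- \<eta>))"
    proof -
      have e: "- ((Hg - \<eta>) * real n) + real n * (R + \<eta>) = real n * (- \<eta>)"
        unfolding \<eta>_def by (simp add: field_simps)
      show ?thesis unfolding \<sigma>_def powr_add[symmetric] e ..
    qed
    finally show ?case using elim(1) unfolding A_def by simp
  qed
  show False by (rule seq_contra[OF ev ab_lim]) (use eps in simp)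
qed



lemma cj_map:
  "cipher_joint n pX pK P1 P2 = map_pmf (\<lambda>(xs,ks). ((P1 (map fst ks) (map fst xs), P2 (map snd ks) (map snd xs)),
      (map fst xs, map snd xs))) (pair_pmf (iid n pX) (iid n pK))"
  unfolding cipher_joint_def pair_pmf_def map_pmf_def by (simp add: bind_assoc_pmf bind_return_pmf)

lemma cj_snd:
  "map_pmf snd (cipher_joint n pX pK P1 P2) = map_pmf (\<lambda>xs. (map fst xs, map snd xs)) (iid n pX)"
proof -
  have "map_pmf snd (cipher_joint n pX pK P1 P2) = map_pmf ((\<lambda>xs. (map fst xs, map snd xs)) \<circ> fst) (pair_pmf (iid n pX) (iid n pK))"
    unfolding cj_map pmf.map_comp by (rule pmf.map_cong) auto
  also have "\<dots> = map_pmf (\<lambda>xs. (map fst xs, map snd xs)) (iid n pX)"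
    by (simp add: pmf.map_comp[symmetric] map_fst_pair_pmf)
  finally show ?thesis .
qed

lemma cj_finite:
  fixes pX pK :: "('a::finite \<times> 'b::finite) pmf"
  shows "finite (set_pmf (cipher_joint n pX pK P1 P2))"
proof -
  have "finite (set_pmf (iid n pX))" "finite (set_pmf (iid n pK))"
    using finite_subset[OF set_pmf_iid finite_Lst] by blast+
  then show ?thesis unfolding cj_map by simp
qed

lemma prob_iid_Lst:
  fixes P :: "('z::finite) pmf"
  shows "measure_pmf.prob (iid n P) (Lst n \<inter> S) = measure_pmf.prob (iid n P) S"
  by (simp add: prob_iid Int_assoc[symmetric])

lemma cj_lower:
  fixes pX pK :: "('a::finite \<times> 'b::finite) pmf"
  assumes T: "\<forall>xs\<in>Lst n \<inter> Dx. \<forall>ks\<in>Lst n \<inter> Ek.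
      ((P1 (map fst ks) (map fst xs), P2 (map snd ks) (map snd xs)), (map fst xs, map snd xs)) \<in> T"
  shows "measure_pmf.prob (cipher_joint n pX pK P1 P2) T \<ge>
         measure_pmf.prob (iid n pX) Dx * measure_pmf.prob (iid n pK) Ek"
proof -
  let ?F = "\<lambda>(xs,ks). ((P1 (map fst ks) (map fst xs), P2 (map snd ks) (map snd xs)), (map fst xs, map snd xs))"
  have "measure_pmf.prob (iid n pX) Dx * measure_pmf.prob (iid n pK) Ek =
        measure_pmf.prob (iid n pX) (Lst n \<inter> Dx) * measure_pmf.prob (iid n pK) (Lst n \<inter> Ek)"
    by (simp add: prob_iid_Lst)
  also have "\<dots> = measure_pmf.prob (pair_pmf (iid n pX) (iid n pK)) ((Lst n \<inter> Dx) \<times> (Lst n \<inter> Ek))"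
    by (rule measure_pmf_prob_product[symmetric]) (auto intro: countable_finite finite_Lst)
  also have "\<dots> \<le> measure_pmf.prob (pair_pmf (iid n pX) (iid n pK)) (?F -` T)"
    by (rule measure_pmf.finite_measure_mono) (use T in auto)
  also have "\<dots> = measure_pmf.prob (cipher_joint n pX pK P1 P2) T"
    unfolding cj_map by simp
  finally show ?thesis .
qed

lemma q_bound:
  fixes J :: "('u \<times> 'v) pmf"
  assumes fin: "finite (set_pmf J)" and Q0: "Q0 \<ge> 0"
    and c: "\<forall>c. measure_pmf.prob (map_pmf snd J) {x. (c,x) \<in> T} \<le> Q0"
  shows "(\<Sum>z\<in>set_pmf J \<inter> T. pmf (map_pmf fst J) (fst z) * pmf (map_pmf snd J) (snd z)) \<le> Q0"
proof -
  let ?A = "map_pmf fst J" and ?B = "map_pmf snd J"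
  let ?h = "\<lambda>z. pmf ?A (fst z) * pmf ?B (snd z)"
  have fA: "finite (set_pmf ?A)" "finite (set_pmf ?B)" using fin by auto
  have "(\<Sum>z\<in>set_pmf J \<inter> T. ?h z) \<le> (\<Sum>z\<in>(set_pmf ?A \<times> set_pmf ?B) \<inter> T. ?h z)"
    by (rule sum_mono2) (use fA set_pmf_sub_marg[of J] in auto)
  also have "(set_pmf ?A \<times> set_pmf ?B) \<inter> T = Sigma (set_pmf ?A) (\<lambda>c. set_pmf ?B \<inter> {x. (c,x) \<in> T})" by auto
  also have "(\<Sum>z\<in>Sigma (set_pmf ?A) (\<lambda>c. set_pmf ?B \<inter> {x. (c,x) \<in> T}). ?h z) =
      (\<Sum>c\<in>set_pmf ?A. \<Sum>x\<in>set_pmf ?B \<inter> {x. (c,x) \<in> T}. pmf ?A c * pmf ?B x)"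
  proof -
    have "(\<Sum>c\<in>set_pmf ?A. \<Sum>x\<in>set_pmf ?B \<inter> {x. (c,x) \<in> T}. pmf ?A c * pmf ?B x) =
          (\<Sum>(c,x)\<in>Sigma (set_pmf ?A) (\<lambda>c. set_pmf ?B \<inter> {x. (c,x) \<in> T}). pmf ?A c * pmf ?B x)"
      by (rule sum.Sigma) (use fA in auto)
    moreover have "(\<Sum>z\<in>Sigma (set_pmf ?A) (\<lambda>c. set_pmf ?B \<inter> {x. (c,x) \<in> T}). ?h z) =
          (\<Sum>(c,x)\<in>Sigma (set_pmf ?A) (\<lambda>c. set_pmf ?B \<inter> {x. (c,x) \<in> T}). pmf ?A c * pmf ?B x)"
      by (rule sum.cong) auto
    ultimately show ?thesis by simp
  qed
  also have "\<dots> = (\<Sum>c\<in>set_pmf ?A. pmf ?A c * measure_pmf.prob ?B {x. (c,x) \<in> T})"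
  proof (rule sum.cong)
    fix c
    have "measure_pmf.prob ?B {x. (c,x) \<in> T} = measure_pmf.prob ?B ({x. (c,x) \<in> T} \<inter> set_pmf ?B)"
      by (rule measure_Int_set_pmf[symmetric])
    also have "\<dots> = (\<Sum>x\<in>set_pmf ?B \<inter> {x. (c,x) \<in> T}. pmf ?B x)"
      by (subst measure_measure_pmf_finite) (use fA in \<open>auto simp: Int_commute\<close>)
    finally show "(\<Sum>x\<in>set_pmf ?B \<inter> {x. (c,x) \<in> T}. pmf ?A c * pmf ?B x) = pmf ?A c * measure_pmf.prob ?B {x. (c,x) \<in> T}"
      by (simp add: sum_distrib_left)
  qed simp
  also have "\<dots> \<le> (\<Sum>c\<in>set_pmf ?A. pmf ?A c * Q0)"
    by (rule sum_mono) (use c in \<open>auto intro: mult_left_mono\<close>)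
  also have "\<dots> = Q0" using fA by (simp add: sum_distrib_right[symmetric] sum_pmf_eq_1)
  finally show ?thesis .
qed



lemma pm_inj: "(map fst zs, map snd zs) = (map fst zs', map snd zs') \<Longrightarrow> zs = zs'"
  by (metis zip_map_fst_snd prod.inject)

lemma pm_inj': "map fst zs = map fst zs' \<Longrightarrow> map snd zs = map snd zs' \<Longrightarrow> zs = zs'"
  by (rule pm_inj) simp

lemma sec_generic:
  fixes pX pK :: "('a::finite \<times> 'b::finite) pmf" and D :: "nat \<Rightarrow> ('a \<times> 'b) list set"
    and Phi1 :: "nat \<Rightarrow> 'a list \<Rightarrow> 'a list \<Rightarrow> 'c" and Phi2 :: "nat \<Rightarrow> 'b list \<Rightarrow> 'b list \<Rightarrow> 'd"
  assumes eps: "\<epsilon> < 1"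
    and Dp: "\<forall>\<^sub>F n in sequentially. measure_pmf.prob (iid n pX) (D n) \<ge> 1 - \<epsilon>"
    and MI: "\<forall>\<^sub>F n in sequentially. mutinf (cipher_joint n pX pK (Phi1 n) (Phi2 n)) \<le> \<delta>"
    and fac: "\<forall>z. pmf pX z = w z * g z" and w0: "\<forall>z. w z \<ge> 0" and g0: "\<forall>z. g z \<ge> 0"
    and gK0: "\<forall>z. gK z \<ge> 0" and gKpos: "\<forall>z. pmf pK z > 0 \<longrightarrow> gK z > 0"
    and cnt: "\<forall>\<^sub>F n in sequentially. \<forall>\<tau>>0. \<forall>c.
       (\<Sum>zs\<in>{zs\<in>Lst n \<inter> D n. \<exists>ks\<in>Lst n. prod_list (map gK ks) \<ge> \<tau> \<and>
            c = (Phi1 n (map fst ks) (map fst zs), Phi2 n (map snd ks) (map snd zs))}. prod_list (map w zs)) \<le> 1 / \<tau>"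
  shows "-(\<Sum>z\<in>UNIV. pmf pK z * log 2 (gK z)) \<ge> -(\<Sum>z\<in>UNIV. pmf pX z * log 2 (g z))"
proof (rule ccontr)
  define Hg where "Hg = -(\<Sum>z\<in>UNIV. pmf pX z * log 2 (g z))"
  define HK where "HK = -(\<Sum>z\<in>UNIV. pmf pK z * log 2 (gK z))"
  assume "\<not> ?thesis"
  then have HH: "HK < Hg" unfolding Hg_def HK_def by simp
  define \<eta> where "\<eta> = (Hg - HK) / 4"
  have \<eta>: "\<eta> > 0" using HH by (simp add: \<eta>_def)
  define g' where "g' = (\<lambda>z. g z * 2 powr (Hg - \<eta>))"
  have gpos: "\<forall>z. pmf pX z > 0 \<longrightarrow> g z > 0" by (rule gpos_of_fac[OF fac w0 g0])
  have g'0: "\<forall>z. g' z \<ge> 0" using g0 by (simp add: g'_def)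
  have g'pos: "\<forall>z. pmf pX z > 0 \<longrightarrow> g' z > 0" using gpos by (simp add: g'_def)
  have "(\<Sum>z\<in>UNIV. pmf pX z * ln (g' z)) = ((Hg - \<eta>) - Hg) * ln 2"
    unfolding g'_def sum_ln_shift[OF gpos] Hg_def by simp
  also have "\<dots> < 0" using \<eta> by simp
  finally have a_lim: "(\<lambda>n. measure_pmf.prob (iid n pX) {zs. prod_list (map g' zs) \<ge> 1}) \<longlonglongrightarrow> 0"
    by (rule chern_up[OF g'0 g'pos])
  define gK' where "gK' = (\<lambda>z. gK z * 2 powr (HK + \<eta>))"
  have gK'0: "\<forall>z. gK' z \<ge> 0" using gK0 by (simp add: gK'_def)
  have gK'pos: "\<forall>z. pmf pK z > 0 \<longrightarrow> gK' z > 0" using gKpos by (simp add: gK'_def)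
  have "(\<Sum>z\<in>UNIV. pmf pK z * ln (gK' z)) = ((HK + \<eta>) - HK) * ln 2"
    unfolding gK'_def sum_ln_shift[OF gKpos] HK_def by simp
  also have "\<dots> > 0" using \<eta> by simp
  finally have b_lim: "(\<lambda>n. measure_pmf.prob (iid n pK) {ks. prod_list (map gK' ks) \<le> 1}) \<longlonglongrightarrow> 0"
    by (rule chern_lo[OF gK'0 gK'pos])
  define A where "A = {zs. prod_list (map g' zs) \<ge> 1}"
  define B where "B = {ks. prod_list (map gK' ks) \<le> 1}"
  define a where "a = (\<lambda>n. measure_pmf.prob (iid n pX) A)"
  define b where "b = (\<lambda>n. measure_pmf.prob (iid n pK) B)"
  have "(\<lambda>n. (1 - \<epsilon> - a n) * (1 - b n)) \<longlonglongrightarrow> (1 - \<epsilon> - 0) * (1 - 0)"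
    unfolding a_def b_def A_def B_def by (intro tendsto_intros a_lim b_lim)
  then have cev: "\<forall>\<^sub>F n in sequentially. (1 - \<epsilon> - a n) * (1 - b n) > (1 - \<epsilon>) / 2"
    by (rule order_tendstoD(1)) (use eps in simp)
  have d_lim: "(\<lambda>n. ((\<delta> + 4) / (2 * \<eta>)) / real n) \<longlonglongrightarrow> 0" by (rule lim_const_over_n)
  have ev: "\<forall>\<^sub>F n in sequentially. (1 - \<epsilon>) / 2 \<le> ((\<delta> + 4) / (2 * \<eta>)) / real n"
    using Dp MI cnt cev eventually_ge_at_top[of 1]
  proof eventually_elim
    case (elim n)
    define cf where "cf = (\<lambda>zs ks. (Phi1 n (map fst ks) (map fst zs), Phi2 n (map snd ks) (map snd zs)))"
    define \<sigma> where "\<sigma> = (2::real) powr (- ((Hg - \<eta>) * real n))"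
    define \<tau> where "\<tau> = (2::real) powr (- ((HK + \<eta>) * real n))"
    define Dx where "Dx = D n - A"
    define Ek where "Ek = UNIV - B"
    define T where "T = {(c, x). \<exists>zs\<in>Lst n \<inter> Dx. \<exists>ks\<in>Lst n \<inter> Ek. c = cf zs ks \<and> x = (map fst zs, map snd zs)}"
    define J where "J = cipher_joint n pX pK (Phi1 n) (Phi2 n)"
    define Q0 where "Q0 = (2::real) powr (real n * (- (2 * \<eta>)))"
    have \<tau>: "\<tau> > 0" by (simp add: \<tau>_def)
    have Q0: "Q0 > 0" by (simp add: Q0_def)
    have pDx: "measure_pmf.prob (iid n pX) Dx \<ge> 1 - \<epsilon> - a n"
    proof -
      have "measure_pmf.prob (iid n pX) (D n) \<le> measure_pmf.prob (iid n pX) (Dx \<union> A)"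
        by (rule measure_pmf.finite_measure_mono) (auto simp: Dx_def)
      also have "\<dots> \<le> measure_pmf.prob (iid n pX) Dx + measure_pmf.prob (iid n pX) A"
        by (rule measure_Un_le) auto
      finally show ?thesis using elim(1) unfolding a_def by simp
    qed
    have pEk: "measure_pmf.prob (iid n pK) Ek = 1 - b n"
      unfolding Ek_def b_def using measure_pmf.prob_compl[of B "iid n pK"] by simp
    have p_low: "measure_pmf.prob J T \<ge> (1 - \<epsilon>) / 2"
    proof -
      have "measure_pmf.prob J T \<ge> measure_pmf.prob (iid n pX) Dx * measure_pmf.prob (iid n pK) Ek"
        unfolding J_def by (rule cj_lower) (auto simp: T_def cf_def)
      moreover have "measure_pmf.prob (iid n pX) Dx * measure_pmf.prob (iid n pK) Ek \<ge> (1 - \<epsilon> - a n) * (1 - b n)"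
        unfolding pEk by (rule mult_right_mono[OF pDx]) (simp add: b_def)
      ultimately show ?thesis using elim(4) by linarith
    qed
    have qb: "\<forall>c. measure_pmf.prob (map_pmf snd J) {x. (c,x) \<in> T} \<le> Q0"
    proof
      fix c
      define U where "U = {zs. (c, (map fst zs, map snd zs)) \<in> T}"
      define V where "V = {zs\<in>Lst n \<inter> D n. \<exists>ks\<in>Lst n. prod_list (map gK ks) \<ge> \<tau> \<and> c = cf zs ks}"
      have mU: "measure_pmf.prob (map_pmf snd J) {x. (c,x) \<in> T} = measure_pmf.prob (iid n pX) U"
        unfolding J_def cj_snd U_def by simp
      have UD: "U \<subseteq> Lst n \<inter> Dx" unfolding U_def T_def by auto (metis pm_inj')+
      have UV: "U \<subseteq> V"
      proof
        fix zs assume "zs \<in> U"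
        then obtain zs' ks where zs': "zs' \<in> Lst n \<inter> Dx" "ks \<in> Lst n \<inter> Ek" "c = cf zs' ks"
          "(map fst zs, map snd zs) = (map fst zs', map snd zs')"
          unfolding U_def T_def by auto
        then have e: "zs = zs'" using pm_inj by blast
        have lk: "length ks = n" using zs' by (simp add: Lst_def)
        have "prod_list (map gK ks) * 2 powr ((HK + \<eta>) * real n) > 1"
          using zs'(2) lk prod_list_shift[of gK "HK + \<eta>" ks] by (simp add: Ek_def B_def gK'_def)
        then have "prod_list (map gK ks) > 1 / 2 powr ((HK + \<eta>) * real n)" by (simp add: field_simps)
        then have "prod_list (map gK ks) \<ge> \<tau>" by (simp add: \<tau>_def powr_minus divide_inverse)
        then show "zs \<in> V" using zs' e unfolding V_def Dx_def by auto
      qed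
      have "measure_pmf.prob (iid n pX) U \<le> \<sigma> * (\<Sum>zs\<in>Lst n \<inter> U. prod_list (map w zs))"
      proof (rule src_bound[OF fac w0 g0], rule ballI)
        fix zs assume zs: "zs \<in> Lst n \<inter> U"
        then have len: "length zs = n" by (simp add: Lst_def)
        have "zs \<notin> A" using zs UD by (auto simp: Dx_def)
        then have "prod_list (map g zs) * 2 powr ((Hg - \<eta>) * real n) < 1"
          using len prod_list_shift[of g "Hg - \<eta>" zs] by (simp add: A_def g'_def)
        then have "prod_list (map g zs) < 1 / 2 powr ((Hg - \<eta>) * real n)"
          by (simp add: field_simps)
        then show "prod_list (map g zs) \<le> \<sigma>" by (simp add: \<sigma>_def powr_minus divide_inverse)
      qed
      also have "(\<Sum>zs\<in>Lst n \<inter> U. prod_list (map w zs)) \<le> (\<Sum>zs\<in>V. prod_list (map w zs))"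
        by (rule sum_mono2) (use UV in \<open>auto simp: V_def finite_Lst prod_list_nonneg'[OF w0]\<close>)
      also have "(\<Sum>zs\<in>V. prod_list (map w zs)) \<le> 1 / \<tau>"
        using elim(3) \<tau> unfolding V_def cf_def by blast
      finally have "measure_pmf.prob (iid n pX) U \<le> \<sigma> * (1 / \<tau>)"
        by (simp add: \<sigma>_def mult_left_mono)
      also have "\<sigma> * (1 / \<tau>) = Q0"
      proof -
        have e: "- ((Hg - \<eta>) * real n) - (- ((HK + \<eta>) * real n)) = real n * (- (2 * \<eta>))"
          unfolding \<eta>_def by (simp add: field_simps)
        have "\<sigma> * (1 / \<tau>) = (2::real) powr (- ((Hg - \<eta>) * real n)) / 2 powr (- ((HK + \<eta>) * real n))"
          unfolding \<sigma>_def \<tau>_def by simp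
        also have "\<dots> = 2 powr (- ((Hg - \<eta>) * real n) - (- ((HK + \<eta>) * real n)))"
          by (rule powr_diff[symmetric])
        also have "\<dots> = Q0" unfolding Q0_def e ..
        finally show ?thesis .
      qed
      finally show "measure_pmf.prob (map_pmf snd J) {x. (c,x) \<in> T} \<le> Q0" using mU by simp
    qed
    have fin: "finite (set_pmf J)" unfolding J_def by (rule cj_finite)
    have mi: "mutinf J \<ge> measure_pmf.prob J T * log 2 (1 / Q0) - 4"
      by (rule mi_lower[OF fin Q0 q_bound[OF fin _ qb]]) (use Q0 in simp)
    have lq: "log 2 (1 / Q0) = 2 * \<eta> * real n"
      unfolding Q0_def by (simp add: powr_minus_divide[symmetric] del: powr_minus_divide)
    have n1: "real n \<ge> 1" using elim(5) by simp
    have pos: "2 * \<eta> * real n > 0" using \<eta> n1 by simp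
    have "measure_pmf.prob J T * (2 * \<eta> * real n) \<le> \<delta> + 4"
      using mi lq elim(2) unfolding J_def by simp
    then have "measure_pmf.prob J T \<le> (\<delta> + 4) / (2 * \<eta> * real n)"
      using pos by (simp add: pos_le_divide_eq)
    moreover have "((\<delta> + 4) / (2 * \<eta>)) / real n = (\<delta> + 4) / (2 * \<eta> * real n)" by simp
    ultimately show ?case using p_low by linarith
  qed
  show False by (rule seq_contra[OF ev d_lim]) (use eps in simp)
qed



lemma sum_Lst_pmf: "(\<Sum>ys\<in>Lst n. prod_list (map (pmf (Q::('b::finite) pmf)) ys)) = 1"
  by (simp add: sum_Lst_prod sum_pmf_eq_1)

lemma cnt_snd:
  fixes Q :: "('b::finite) pmf" and U :: "('a::finite \<times> 'b) list set"
  assumes N: "\<forall>ys\<in>Lst n. real (card {xs\<in>Lst n. zip xs ys \<in> U}) \<le> N"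
  shows "(\<Sum>zs\<in>Lst n \<inter> U. prod_list (map (\<lambda>z. pmf Q (snd z)) zs)) \<le> N"
proof -
  let ?h = "\<lambda>zs. (map snd zs, map fst zs)"
  let ?S = "Sigma (Lst n) (\<lambda>ys. {xs\<in>Lst n. zip xs ys \<in> U})"
  have bij: "bij_betw ?h (Lst n \<inter> U) ?S"
  proof (rule bij_betw_imageI)
    show "inj_on ?h (Lst n \<inter> U)" by (auto simp: inj_on_def intro: pm_inj')
    show "?h ` (Lst n \<inter> U) = ?S"
    proof
      show "?h ` (Lst n \<inter> U) \<subseteq> ?S" by (auto simp: Lst_def zip_map_fst_snd)
      show "?S \<subseteq> ?h ` (Lst n \<inter> U)"
      proof
        fix p assume "p \<in> ?S"
        then obtain ys xs where p: "p = (ys, xs)" "length ys = n" "length xs = n" "zip xs ys \<in> U"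
          by (auto simp: Lst_def)
        then have "p = ?h (zip xs ys)" by simp
        moreover have "zip xs ys \<in> Lst n \<inter> U" using p by (simp add: Lst_def)
        ultimately show "p \<in> ?h ` (Lst n \<inter> U)" by blast
      qed
    qed
  qed
  have "(\<Sum>zs\<in>Lst n \<inter> U. prod_list (map (\<lambda>z. pmf Q (snd z)) zs)) =
        (\<Sum>zs\<in>Lst n \<inter> U. (\<lambda>(ys,xs). prod_list (map (pmf Q) ys)) (?h zs))"
    by (simp add: comp_def)
  also have "\<dots> = (\<Sum>p\<in>?S. (\<lambda>(ys,xs). prod_list (map (pmf Q) ys)) p)"
    by (rule sum.reindex_bij_betw[OF bij])
  also have "\<dots> = (\<Sum>ys\<in>Lst n. \<Sum>xs\<in>{xs\<in>Lst n. zip xs ys \<in> U}. prod_list (map (pmf Q) ys))"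
    by (subst sum.Sigma[symmetric]) (auto simp: finite_Lst)
  also have "\<dots> = (\<Sum>ys\<in>Lst n. real (card {xs\<in>Lst n. zip xs ys \<in> U}) * prod_list (map (pmf Q) ys))"
    by simp
  also have "\<dots> \<le> (\<Sum>ys\<in>Lst n. N * prod_list (map (pmf Q) ys))"
    by (rule sum_mono) (use N in \<open>auto intro!: mult_right_mono prod_list_nonneg'\<close>)
  also have "\<dots> = N" by (simp add: sum_distrib_left[symmetric] sum_Lst_pmf)
  finally show ?thesis .
qed

lemma cnt_fst:
  fixes Q :: "('a::finite) pmf" and U :: "('a \<times> 'b::finite) list set"
  assumes N: "\<forall>xs\<in>Lst n. real (card {ys\<in>Lst n. zip xs ys \<in> U}) \<le> N"
  shows "(\<Sum>zs\<in>Lst n \<inter> U. prod_list (map (\<lambda>z. pmf Q (fst z)) zs)) \<le> N"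
proof -
  let ?h = "\<lambda>zs. (map fst zs, map snd zs)"
  let ?S = "Sigma (Lst n) (\<lambda>xs. {ys\<in>Lst n. zip xs ys \<in> U})"
  have bij: "bij_betw ?h (Lst n \<inter> U) ?S"
  proof (rule bij_betw_imageI)
    show "inj_on ?h (Lst n \<inter> U)" by (auto simp: inj_on_def intro: pm_inj')
    show "?h ` (Lst n \<inter> U) = ?S"
    proof
      show "?h ` (Lst n \<inter> U) \<subseteq> ?S" by (auto simp: Lst_def zip_map_fst_snd)
      show "?S \<subseteq> ?h ` (Lst n \<inter> U)"
      proof
        fix p assume "p \<in> ?S"
        then obtain ys xs where p: "p = (xs, ys)" "length ys = n" "length xs = n" "zip xs ys \<in> U"
          by (auto simp: Lst_def)
        then have "p = ?h (zip xs ys)" by simp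
        moreover have "zip xs ys \<in> Lst n \<inter> U" using p by (simp add: Lst_def)
        ultimately show "p \<in> ?h ` (Lst n \<inter> U)" by blast
      qed
    qed
  qed
  have "(\<Sum>zs\<in>Lst n \<inter> U. prod_list (map (\<lambda>z. pmf Q (fst z)) zs)) =
        (\<Sum>zs\<in>Lst n \<inter> U. (\<lambda>(xs,ys). prod_list (map (pmf Q) xs)) (?h zs))"
    by (simp add: comp_def)
  also have "\<dots> = (\<Sum>p\<in>?S. (\<lambda>(xs,ys). prod_list (map (pmf Q) xs)) p)"
    by (rule sum.reindex_bij_betw[OF bij])
  also have "\<dots> = (\<Sum>xs\<in>Lst n. \<Sum>ys\<in>{ys\<in>Lst n. zip xs ys \<in> U}. prod_list (map (pmf Q) xs))"
    by (subst sum.Sigma[symmetric]) (auto simp: finite_Lst)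
  also have "\<dots> = (\<Sum>xs\<in>Lst n. real (card {ys\<in>Lst n. zip xs ys \<in> U}) * prod_list (map (pmf Q) xs))"
    by simp
  also have "\<dots> \<le> (\<Sum>xs\<in>Lst n. N * prod_list (map (pmf Q) xs))"
    by (rule sum_mono) (use N in \<open>auto intro!: mult_right_mono prod_list_nonneg'\<close>)
  also have "\<dots> = N" by (simp add: sum_distrib_left[symmetric] sum_Lst_pmf)
  finally show ?thesis .
qed

lemma card_heavy:
  fixes Q :: "('z::finite) pmf"
  assumes \<tau>: "\<tau> > 0"
  shows "real (card {ks\<in>Lst n. prod_list (map (pmf Q) ks) \<ge> \<tau>}) \<le> 1 / \<tau>"
proof -
  let ?K = "{ks\<in>Lst n. prod_list (map (pmf Q) ks) \<ge> \<tau>}"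
  have "real (card ?K) * \<tau> = (\<Sum>ks\<in>?K. \<tau>)" by simp
  also have "\<dots> \<le> (\<Sum>ks\<in>?K. prod_list (map (pmf Q) ks))" by (rule sum_mono) auto
  also have "\<dots> \<le> (\<Sum>ks\<in>Lst n. prod_list (map (pmf Q) ks))"
    by (rule sum_mono2) (auto simp: finite_Lst intro!: prod_list_nonneg')
  also have "\<dots> = 1" by (rule sum_Lst_pmf)
  finally show ?thesis using \<tau> by (simp add: field_simps)
qed

lemma card_inj_le_real:
  assumes "inj_on f A" "f ` A \<subseteq> B" "finite B" "real (card B) \<le> N"
  shows "real (card A) \<le> N"
  using card_inj_on_le[OF assms(1-3)] assms(4) by linarith



lemma rate_conv:
  assumes "finite C" "C \<noteq> {}" "n \<ge> 1" "log 2 (real (card C)) / real n \<le> R"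
  shows "real (card C) \<le> 2 powr (real n * R)"
proof -
  have c: "real (card C) > 0" using assms(1,2) by (simp add: card_gt_0_iff)
  have "log 2 (real (card C)) \<le> real n * R" using assms(3,4) by (simp add: divide_le_eq mult.commute)
  then have "2 powr (log 2 (real (card C))) \<le> 2 powr (real n * R)" by (rule powr_mono) simp
  then show ?thesis using c by simp
qed

lemma dec_unique:
  assumes sys: "is_system n C1 C2 Phi1 Phi2 Psi phi1 phi2 psi"
    and len: "length k1 = n" "length k2 = n" "length x1 = n" "length x2 = n" "length x1' = n" "length x2' = n"
    and d: "psi (phi1 x1) (phi2 x2) = (x1, x2)" "psi (phi1 x1') (phi2 x2') = (x1', x2')"
    and e: "Phi1 k1 x1 = Phi1 k1 x1'" "Phi2 k2 x2 = Phi2 k2 x2'"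
  shows "x1 = x1' \<and> x2 = x2'"
proof -
  have "(x1, x2) = Psi k1 k2 (Phi1 k1 x1) (Phi2 k2 x2)" using sys len d unfolding is_system_def by metis
  also have "\<dots> = Psi k1 k2 (Phi1 k1 x1') (Phi2 k2 x2')" using e by simp
  also have "\<dots> = (x1', x2')" using sys len d unfolding is_system_def by metis
  finally show ?thesis by simp
qed

lemma prod_list_ones: "prod_list (map (\<lambda>_. (1::real)) zs) = 1"
  by (induction zs) auto



theorem theorem3:
  fixes pX pK :: "('a::{field,finite} \<times> 'b::{field,finite}) pmf"
    and \<delta>0 \<epsilon> \<delta> :: real
  assumes "\<delta>0 > 0"
    and "0 < \<epsilon>" and "\<epsilon> < 1"
    and "0 \<le> \<delta>" and "\<delta> \<le> \<delta>0"
  shows "reliable_secure_region \<epsilon> \<delta> pX pK \<subseteq> R_out pX pK"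
proof
  have eps: "\<epsilon> < 1" by fact
  fix r assume "r \<in> reliable_secure_region \<epsilon> \<delta> pX pK"
  then obtain R1 R2 C1 C2 Phi1 Phi2 Psi phi1 phi2 psi where r: "r = (R1, R2)"
    and sys: "\<forall>n\<ge>1. is_system n (C1 n) (C2 n) (Phi1 n) (Phi2 n) (Psi n) (phi1 n) (phi2 n) (psi n)"
    and rt: "\<forall>\<gamma>>0. \<exists>n0. \<forall>n\<ge>n0. n \<ge> 1 \<longrightarrow>
          log 2 (real (card (C1 n))) / real n \<le> R1 + \<gamma> \<and>
          log 2 (real (card (C2 n))) / real n \<le> R2 + \<gamma> \<and>
          err_prob n pX (phi1 n) (phi2 n) (psi n) \<le> \<epsilon> \<and>
          mutinf (cipher_joint n pX pK (Phi1 n) (Phi2 n)) \<le> \<delta>"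
    unfolding reliable_secure_region_def by blast
  have evg: "\<forall>\<^sub>F n in sequentially. n \<ge> 1 \<and>
          log 2 (real (card (C1 n))) / real n \<le> R1 + \<gamma> \<and>
          log 2 (real (card (C2 n))) / real n \<le> R2 + \<gamma> \<and>
          err_prob n pX (phi1 n) (phi2 n) (psi n) \<le> \<epsilon> \<and>
          mutinf (cipher_joint n pX pK (Phi1 n) (Phi2 n)) \<le> \<delta>" if g: "\<gamma> > 0" for \<gamma>
  proof -
    obtain n0 where n0: "\<forall>n\<ge>n0. n \<ge> 1 \<longrightarrow>
          log 2 (real (card (C1 n))) / real n \<le> R1 + \<gamma> \<and>
          log 2 (real (card (C2 n))) / real n \<le> R2 + \<gamma> \<and>
          err_prob n pX (phi1 n) (phi2 n) (psi n) \<le> \<epsilon> \<and>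
          mutinf (cipher_joint n pX pK (Phi1 n) (Phi2 n)) \<le> \<delta>" using rt g by blast
    show ?thesis unfolding eventually_sequentially
      by (rule exI[of _ "max n0 1"]) (use n0 in auto)
  qed
  note E1 = evg[OF zero_less_one]
  define D where "D = (\<lambda>n. {zs :: ('a \<times> 'b) list. psi n (phi1 n (map fst zs)) (phi2 n (map snd zs)) = (map fst zs, map snd zs)})"
  have err_eq: "err_prob n pX (phi1 n) (phi2 n) (psi n) = 1 - measure_pmf.prob (iid n pX) (D n)" for n
  proof -
    have "(\<lambda>xs. (map fst xs, map snd xs)) -` {(x1, x2). psi n (phi1 n x1) (phi2 n x2) \<noteq> (x1, x2)} = UNIV - D n"
      by (auto simp: D_def)
    then show ?thesis unfolding err_prob_def using measure_pmf.prob_compl[of "D n" "iid n pX"] by simp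
  qed
  have Dp: "\<forall>\<^sub>F n in sequentially. measure_pmf.prob (iid n pX) (D n) \<ge> 1 - \<epsilon>"
    using E1 by eventually_elim (auto simp: err_eq)
  have MI: "\<forall>\<^sub>F n in sequentially. mutinf (cipher_joint n pX pK (Phi1 n) (Phi2 n)) \<le> \<delta>"
    using E1 by eventually_elim auto
  have ev1: "\<forall>\<^sub>F n in sequentially. n \<ge> 1" using E1 by eventually_elim auto
  define k0a where "k0a = (\<lambda>n. replicate n (undefined :: 'a))"
  define k0b where "k0b = (\<lambda>n. replicate n (undefined :: 'b))"
  have C1ne: "C1 n \<noteq> {}" "finite (C1 n)" if "n \<ge> 1" for n
    using sys that unfolding is_system_def by (metis empty_iff length_replicate)+
  have C2ne: "C2 n \<noteq> {}" "finite (C2 n)" if "n \<ge> 1" for n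
    using sys that unfolding is_system_def by (metis empty_iff length_replicate)+
  have rate1: "\<forall>\<^sub>F n in sequentially. real (card (C1 n)) \<le> 2 powr (real n * (R1 + \<gamma>))" if "\<gamma> > 0" for \<gamma>
    using evg[OF that]
  proof eventually_elim
    case (elim n)
    then have n1: "n \<ge> 1" by simp
    show ?case by (rule rate_conv[OF C1ne(2)[OF n1] C1ne(1)[OF n1] n1]) (use elim in simp)
  qed
  have rate2: "\<forall>\<^sub>F n in sequentially. real (card (C2 n)) \<le> 2 powr (real n * (R2 + \<gamma>))" if "\<gamma> > 0" for \<gamma>
    using evg[OF that]
  proof eventually_elim
    case (elim n)
    then have n1: "n \<ge> 1" by simp
    show ?case by (rule rate_conv[OF C2ne(2)[OF n1] C2ne(1)[OF n1] n1]) (use elim in simp)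
  qed
  have rate1a: "\<forall>\<gamma>>0. \<forall>\<^sub>F n in sequentially. real (card (C1 n)) \<le> 2 powr (real n * (R1 + \<gamma>))"
    using rate1 by blast
  have rate2a: "\<forall>\<gamma>>0. \<forall>\<^sub>F n in sequentially. real (card (C2 n)) \<le> 2 powr (real n * (R2 + \<gamma>))"
    using rate2 by blast
  have Dzip: "zip xs ys \<in> D n \<longleftrightarrow> psi n (phi1 n xs) (phi2 n ys) = (xs, ys)" if "length xs = length ys" for xs ys n
    using that by (simp add: D_def)
  have Dmem: "psi n (phi1 n (map fst zs)) (phi2 n (map snd zs)) = (map fst zs, map snd zs)" if "zs \<in> D n" for zs n
    using that by (simp add: D_def)
  have facA: "\<forall>z. pmf pX z = pmf (map_pmf snd pX) (snd z) * (pmf pX z / pmf (map_pmf snd pX) (snd z))"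
  proof
    fix z show "pmf pX z = pmf (map_pmf snd pX) (snd z) * (pmf pX z / pmf (map_pmf snd pX) (snd z))"
      using pmf_map_snd_ge[of pX z] pmf_nonneg[of pX z] by (cases "pmf (map_pmf snd pX) (snd z) = 0") auto
  qed
  have facB: "\<forall>z. pmf pX z = pmf (map_pmf fst pX) (fst z) * (pmf pX z / pmf (map_pmf fst pX) (fst z))"
  proof
    fix z show "pmf pX z = pmf (map_pmf fst pX) (fst z) * (pmf pX z / pmf (map_pmf fst pX) (fst z))"
      using pmf_map_fst_ge[of pX z] pmf_nonneg[of pX z] by (cases "pmf (map_pmf fst pX) (fst z) = 0") auto
  qed
  have facC: "\<forall>z. pmf pX z = 1 * pmf pX z" by simp
  have A: "R1 \<ge> ent pX - ent (map_pmf snd pX)"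
  proof -
    have "R1 \<ge> -(\<Sum>z\<in>UNIV. pmf pX z * log 2 (pmf pX z / pmf (map_pmf snd pX) (snd z)))"
    proof (rule sw_generic[OF eps Dp facA _ _ _ rate1a])
      show "\<forall>\<^sub>F n in sequentially. (\<Sum>zs\<in>Lst n \<inter> D n. prod_list (map (\<lambda>z. pmf (map_pmf snd pX) (snd z)) zs)) \<le> real (card (C1 n))"
        using ev1
      proof eventually_elim
        case (elim n)
        have s: "is_system n (C1 n) (C2 n) (Phi1 n) (Phi2 n) (Psi n) (phi1 n) (phi2 n) (psi n)" using sys elim by blast
        show ?case
        proof (rule cnt_snd, rule ballI)
          fix ys :: "'b list" assume ys: "ys \<in> Lst n"
          show "real (card {xs\<in>Lst n. zip xs ys \<in> D n}) \<le> real (card (C1 n))"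
          proof (rule card_inj_le_real[of "Phi1 n (k0a n)"])
            show "inj_on (Phi1 n (k0a n)) {xs\<in>Lst n. zip xs ys \<in> D n}"
            proof (rule inj_onI)
              fix xs xs' assume a: "xs \<in> {xs\<in>Lst n. zip xs ys \<in> D n}" "xs' \<in> {xs\<in>Lst n. zip xs ys \<in> D n}"
                and e: "Phi1 n (k0a n) xs = Phi1 n (k0a n) xs'"
              show "xs = xs'"
                using dec_unique[OF s, of "k0a n" "k0b n" xs ys xs' ys] a e ys Dzip
                by (auto simp: Lst_def k0a_def k0b_def)
            qed
            show "Phi1 n (k0a n) ` {xs\<in>Lst n. zip xs ys \<in> D n} \<subseteq> C1 n"
              using s by (auto simp: is_system_def Lst_def k0a_def)
          qed (use C1ne elim in auto)
        qed
      qed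
    qed auto
    then show ?thesis using cond2_ent[of pX] by simp
  qed
  have B: "R2 \<ge> ent pX - ent (map_pmf fst pX)"
  proof -
    have "R2 \<ge> -(\<Sum>z\<in>UNIV. pmf pX z * log 2 (pmf pX z / pmf (map_pmf fst pX) (fst z)))"
    proof (rule sw_generic[OF eps Dp facB _ _ _ rate2a])
      show "\<forall>\<^sub>F n in sequentially. (\<Sum>zs\<in>Lst n \<inter> D n. prod_list (map (\<lambda>z. pmf (map_pmf fst pX) (fst z)) zs)) \<le> real (card (C2 n))"
        using ev1
      proof eventually_elim
        case (elim n)
        have s: "is_system n (C1 n) (C2 n) (Phi1 n) (Phi2 n) (Psi n) (phi1 n) (phi2 n) (psi n)" using sys elim by blast
        show ?case
        proof (rule cnt_fst, rule ballI)
          fix xs :: "'a list" assume xs: "xs \<in> Lst n"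
          show "real (card {ys\<in>Lst n. zip xs ys \<in> D n}) \<le> real (card (C2 n))"
          proof (rule card_inj_le_real[of "Phi2 n (k0b n)"])
            show "inj_on (Phi2 n (k0b n)) {ys\<in>Lst n. zip xs ys \<in> D n}"
            proof (rule inj_onI)
              fix ys ys' assume a: "ys \<in> {ys\<in>Lst n. zip xs ys \<in> D n}" "ys' \<in> {ys\<in>Lst n. zip xs ys \<in> D n}"
                and e: "Phi2 n (k0b n) ys = Phi2 n (k0b n) ys'"
              show "ys = ys'"
                using dec_unique[OF s, of "k0a n" "k0b n" xs ys xs ys'] a e xs Dzip
                by (auto simp: Lst_def k0a_def k0b_def)
            qed
            show "Phi2 n (k0b n) ` {ys\<in>Lst n. zip xs ys \<in> D n} \<subseteq> C2 n"
              using s by (auto simp: is_system_def Lst_def k0b_def)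
          qed (use C2ne elim in auto)
        qed
      qed
    qed auto
    then show ?thesis using cond1_ent[of pX] by simp
  qed
  have C: "R1 + R2 \<ge> ent pX"
  proof -
    have rateC: "\<forall>\<gamma>>0. \<forall>\<^sub>F n in sequentially. real (card (C1 n)) * real (card (C2 n)) \<le> 2 powr (real n * ((R1 + R2) + \<gamma>))"
    proof (intro allI impI)
      fix \<gamma> :: real assume g: "\<gamma> > 0"
      show "\<forall>\<^sub>F n in sequentially. real (card (C1 n)) * real (card (C2 n)) \<le> 2 powr (real n * ((R1 + R2) + \<gamma>))"
        using rate1[of "\<gamma>/2"] rate2[of "\<gamma>/2"] g
      proof -
        have g2: "\<gamma>/2 > 0" using g by simp
        show ?thesis using rate1[OF g2] rate2[OF g2]
      proof eventually_elim
        case (elim n)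
        have "real (card (C1 n)) * real (card (C2 n)) \<le> 2 powr (real n * (R1 + \<gamma>/2)) * 2 powr (real n * (R2 + \<gamma>/2))"
          using elim by (intro mult_mono) auto
        also have "\<dots> = 2 powr (real n * (R1 + \<gamma>/2) + real n * (R2 + \<gamma>/2))" by (rule powr_add[symmetric])
        also have "real n * (R1 + \<gamma>/2) + real n * (R2 + \<gamma>/2) = real n * ((R1 + R2) + \<gamma>)" by (simp add: algebra_simps)
        finally show ?case .
      qed
      qed
    qed
    have "R1 + R2 \<ge> -(\<Sum>z\<in>UNIV. pmf pX z * log 2 (pmf pX z))"
    proof (rule sw_generic[where w="\<lambda>_. 1" and g="pmf pX", OF eps Dp facC _ _ _ rateC])
      show "\<forall>\<^sub>F n in sequentially. (\<Sum>zs\<in>Lst n \<inter> D n. prod_list (map (\<lambda>_. 1) zs)) \<le> real (card (C1 n)) * real (card (C2 n))"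
        using ev1
      proof eventually_elim
        case (elim n)
        have s: "is_system n (C1 n) (C2 n) (Phi1 n) (Phi2 n) (Psi n) (phi1 n) (phi2 n) (psi n)" using sys elim by blast
        let ?f = "\<lambda>zs. (Phi1 n (k0a n) (map fst zs), Phi2 n (k0b n) (map snd zs))"
        have "(\<Sum>zs\<in>Lst n \<inter> D n. prod_list (map (\<lambda>_. (1::real)) zs)) = real (card (Lst n \<inter> D n))"
          by (simp add: prod_list_ones)
        also have "\<dots> \<le> real (card (C1 n \<times> C2 n))"
        proof (rule card_inj_le_real[of ?f])
          show "inj_on ?f (Lst n \<inter> D n)"
          proof (rule inj_onI)
            fix zs zs' assume a: "zs \<in> Lst n \<inter> D n" "zs' \<in> Lst n \<inter> D n" and e: "?f zs = ?f zs'"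
            have "map fst zs = map fst zs' \<and> map snd zs = map snd zs'"
              using dec_unique[OF s, of "k0a n" "k0b n" "map fst zs" "map snd zs" "map fst zs'" "map snd zs'"] a e Dmem
              by (auto simp: Lst_def k0a_def k0b_def)
            then show "zs = zs'" by (auto intro: pm_inj')
          qed
          show "?f ` (Lst n \<inter> D n) \<subseteq> C1 n \<times> C2 n"
            using s by (auto simp: is_system_def Lst_def k0a_def k0b_def)
        qed (use C1ne C2ne elim in auto)
        also have "\<dots> = real (card (C1 n)) * real (card (C2 n))" by (simp add: card_cartesian_product)
        finally show ?case .
      qed
    qed auto
    then show ?thesis by (simp add: ent_UNIV)
  qed
  have Dthm: "ent (map_pmf fst pK) \<ge> ent pX - ent (map_pmf snd pX)"
  proof -
    let ?gK = "\<lambda>z. pmf (map_pmf fst pK) (fst z)"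
    have gKpos: "\<forall>z. pmf pK z > 0 \<longrightarrow> ?gK z > 0" using pmf_map_fst_ge[of pK] by (auto intro: less_le_trans)
    have "-(\<Sum>z\<in>UNIV. pmf pK z * log 2 (?gK z)) \<ge> -(\<Sum>z\<in>UNIV. pmf pX z * log 2 (pmf pX z / pmf (map_pmf snd pX) (snd z)))"
    proof (rule sec_generic[OF eps Dp MI facA _ _ _ gKpos])
      show "\<forall>\<^sub>F n in sequentially. \<forall>\<tau>>0. \<forall>c.
       (\<Sum>zs\<in>{zs\<in>Lst n \<inter> D n. \<exists>ks\<in>Lst n. prod_list (map ?gK ks) \<ge> \<tau> \<and>
            c = (Phi1 n (map fst ks) (map fst zs), Phi2 n (map snd ks) (map snd zs))}.
            prod_list (map (\<lambda>z. pmf (map_pmf snd pX) (snd z)) zs)) \<le> 1 / \<tau>"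
        using ev1
      proof eventually_elim
        case (elim n)
        have s: "is_system n (C1 n) (C2 n) (Phi1 n) (Phi2 n) (Psi n) (phi1 n) (phi2 n) (psi n)" using sys elim by blast
        show ?case
        proof (intro allI impI)
          fix \<tau> :: real and c assume \<tau>: "\<tau> > 0"
          define V where "V = {zs\<in>Lst n \<inter> D n. \<exists>ks\<in>Lst n. prod_list (map ?gK ks) \<ge> \<tau> \<and>
            c = (Phi1 n (map fst ks) (map fst zs), Phi2 n (map snd ks) (map snd zs))}"
          define K1 where "K1 = {k1\<in>Lst n. prod_list (map (pmf (map_pmf fst pK)) k1) \<ge> \<tau>}"
          have VL: "V = Lst n \<inter> V" by (auto simp: V_def)
          have "(\<Sum>zs\<in>Lst n \<inter> V. prod_list (map (\<lambda>z. pmf (map_pmf snd pX) (snd z)) zs)) \<le> 1 / \<tau>"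
          proof (rule cnt_snd, rule ballI)
            fix ys :: "'b list" assume ys: "ys \<in> Lst n"
            define f where "f = (\<lambda>xs. SOME k1. k1 \<in> K1 \<and> Phi1 n k1 xs = fst c)"
            have fx: "f xs \<in> K1 \<and> Phi1 n (f xs) xs = fst c" if xs: "xs \<in> {xs\<in>Lst n. zip xs ys \<in> V}" for xs
            proof -
              obtain ks where ks: "ks \<in> Lst n" "prod_list (map ?gK ks) \<ge> \<tau>"
                "c = (Phi1 n (map fst ks) (map fst (zip xs ys)), Phi2 n (map snd ks) (map snd (zip xs ys)))"
                using xs unfolding V_def by blast
              have "map fst ks \<in> K1 \<and> Phi1 n (map fst ks) xs = fst c"
                using ks xs ys by (simp add: K1_def Lst_def comp_def)
              then show ?thesis unfolding f_def by (rule someI)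
            qed
            show "real (card {xs\<in>Lst n. zip xs ys \<in> V}) \<le> 1 / \<tau>"
            proof (rule card_inj_le_real[of f])
              show "inj_on f {xs\<in>Lst n. zip xs ys \<in> V}"
              proof (rule inj_onI)
                fix xs xs' assume a: "xs \<in> {xs\<in>Lst n. zip xs ys \<in> V}" "xs' \<in> {xs\<in>Lst n. zip xs ys \<in> V}"
                  and e: "f xs = f xs'"
                have l: "length (f xs) = n" using fx[OF a(1)] by (simp add: K1_def Lst_def)
                have "Phi1 n (f xs) xs = Phi1 n (f xs) xs'" using fx[OF a(1)] fx[OF a(2)] e by simp
                then show "xs = xs'"
                  using dec_unique[OF s, of "f xs" "k0b n" xs ys xs' ys] a ys l Dzip
                  by (auto simp: Lst_def k0b_def V_def)
              qed
              show "f ` {xs\<in>Lst n. zip xs ys \<in> V} \<subseteq> K1" using fx by blast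
              show "finite K1" unfolding K1_def by (rule finite_subset[OF _ finite_Lst]) auto
              show "real (card K1) \<le> 1 / \<tau>" unfolding K1_def by (rule card_heavy[OF \<tau>])
            qed
          qed
          then show "(\<Sum>zs\<in>V. prod_list (map (\<lambda>z. pmf (map_pmf snd pX) (snd z)) zs)) \<le> 1 / \<tau>"
            using VL by simp
        qed
      qed
    qed auto
    then show ?thesis using cond2_ent[of pX] ent_fst_as[of pK] by simp
  qed
  have Ethm: "ent (map_pmf snd pK) \<ge> ent pX - ent (map_pmf fst pX)"
  proof -
    let ?gK = "\<lambda>z. pmf (map_pmf snd pK) (snd z)"
    have gKpos: "\<forall>z. pmf pK z > 0 \<longrightarrow> ?gK z > 0" using pmf_map_snd_ge[of pK] by (auto intro: less_le_trans)
    have "-(\<Sum>z\<in>UNIV. pmf pK z * log 2 (?gK z)) \<ge> -(\<Sum>z\<in>UNIV. pmf pX z * log 2 (pmf pX z / pmf (map_pmf fst pX) (fst z)))"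
    proof (rule sec_generic[OF eps Dp MI facB _ _ _ gKpos])
      show "\<forall>\<^sub>F n in sequentially. \<forall>\<tau>>0. \<forall>c.
       (\<Sum>zs\<in>{zs\<in>Lst n \<inter> D n. \<exists>ks\<in>Lst n. prod_list (map ?gK ks) \<ge> \<tau> \<and>
            c = (Phi1 n (map fst ks) (map fst zs), Phi2 n (map snd ks) (map snd zs))}.
            prod_list (map (\<lambda>z. pmf (map_pmf fst pX) (fst z)) zs)) \<le> 1 / \<tau>"
        using ev1
      proof eventually_elim
        case (elim n)
        have s: "is_system n (C1 n) (C2 n) (Phi1 n) (Phi2 n) (Psi n) (phi1 n) (phi2 n) (psi n)" using sys elim by blast
        show ?case
        proof (intro allI impI)
          fix \<tau> :: real and c assume \<tau>: "\<tau> > 0"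
          define V where "V = {zs\<in>Lst n \<inter> D n. \<exists>ks\<in>Lst n. prod_list (map ?gK ks) \<ge> \<tau> \<and>
            c = (Phi1 n (map fst ks) (map fst zs), Phi2 n (map snd ks) (map snd zs))}"
          define K2 where "K2 = {k2\<in>Lst n. prod_list (map (pmf (map_pmf snd pK)) k2) \<ge> \<tau>}"
          have VL: "V = Lst n \<inter> V" by (auto simp: V_def)
          have "(\<Sum>zs\<in>Lst n \<inter> V. prod_list (map (\<lambda>z. pmf (map_pmf fst pX) (fst z)) zs)) \<le> 1 / \<tau>"
          proof (rule cnt_fst, rule ballI)
            fix xs :: "'a list" assume xs: "xs \<in> Lst n"
            define f where "f = (\<lambda>ys. SOME k2. k2 \<in> K2 \<and> Phi2 n k2 ys = snd c)"
            have fy: "f ys \<in> K2 \<and> Phi2 n (f ys) ys = snd c" if ys: "ys \<in> {ys\<in>Lst n. zip xs ys \<in> V}" for ys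
            proof -
              obtain ks where ks: "ks \<in> Lst n" "prod_list (map ?gK ks) \<ge> \<tau>"
                "c = (Phi1 n (map fst ks) (map fst (zip xs ys)), Phi2 n (map snd ks) (map snd (zip xs ys)))"
                using ys unfolding V_def by blast
              have "map snd ks \<in> K2 \<and> Phi2 n (map snd ks) ys = snd c"
                using ks xs ys by (simp add: K2_def Lst_def comp_def)
              then show ?thesis unfolding f_def by (rule someI)
            qed
            show "real (card {ys\<in>Lst n. zip xs ys \<in> V}) \<le> 1 / \<tau>"
            proof (rule card_inj_le_real[of f])
              show "inj_on f {ys\<in>Lst n. zip xs ys \<in> V}"
              proof (rule inj_onI)
                fix ys ys' assume a: "ys \<in> {ys\<in>Lst n. zip xs ys \<in> V}" "ys' \<in> {ys\<in>Lst n. zip xs ys \<in> V}"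
                  and e: "f ys = f ys'"
                have l: "length (f ys) = n" using fy[OF a(1)] by (simp add: K2_def Lst_def)
                have "Phi2 n (f ys) ys = Phi2 n (f ys) ys'" using fy[OF a(1)] fy[OF a(2)] e by simp
                then show "ys = ys'"
                  using dec_unique[OF s, of "k0a n" "f ys" xs ys xs ys'] a xs l Dzip
                  by (auto simp: Lst_def k0a_def V_def)
              qed
              show "f ` {ys\<in>Lst n. zip xs ys \<in> V} \<subseteq> K2" using fy by blast
              show "finite K2" unfolding K2_def by (rule finite_subset[OF _ finite_Lst]) auto
              show "real (card K2) \<le> 1 / \<tau>" unfolding K2_def by (rule card_heavy[OF \<tau>])
            qed
          qed
          then show "(\<Sum>zs\<in>V. prod_list (map (\<lambda>z. pmf (map_pmf fst pX) (fst z)) zs)) \<le> 1 / \<tau>"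
            using VL by simp
        qed
      qed
    qed auto
    then show ?thesis using cond1_ent[of pX] ent_snd_as[of pK] by simp
  qed
  have Fthm: "ent pK \<ge> ent pX"
  proof -
    have gKpos: "\<forall>z. pmf pK z > 0 \<longrightarrow> pmf pK z > 0" by simp
    have "-(\<Sum>z\<in>UNIV. pmf pK z * log 2 (pmf pK z)) \<ge> -(\<Sum>z\<in>UNIV. pmf pX z * log 2 (pmf pX z))"
    proof (rule sec_generic[where w="\<lambda>_. 1" and g="pmf pX", OF eps Dp MI facC _ _ _ gKpos])
      show "\<forall>\<^sub>F n in sequentially. \<forall>\<tau>>0. \<forall>c.
       (\<Sum>zs\<in>{zs\<in>Lst n \<inter> D n. \<exists>ks\<in>Lst n. prod_list (map (pmf pK) ks) \<ge> \<tau> \<and>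
            c = (Phi1 n (map fst ks) (map fst zs), Phi2 n (map snd ks) (map snd zs))}.
            prod_list (map (\<lambda>_. 1) zs)) \<le> 1 / \<tau>"
        using ev1
      proof eventually_elim
        case (elim n)
        have s: "is_system n (C1 n) (C2 n) (Phi1 n) (Phi2 n) (Psi n) (phi1 n) (phi2 n) (psi n)" using sys elim by blast
        show ?case
        proof (intro allI impI)
          fix \<tau> :: real and c assume \<tau>: "\<tau> > 0"
          define V where "V = {zs\<in>Lst n \<inter> D n. \<exists>ks\<in>Lst n. prod_list (map (pmf pK) ks) \<ge> \<tau> \<and>
            c = (Phi1 n (map fst ks) (map fst zs), Phi2 n (map snd ks) (map snd zs))}"
          define K where "K = {ks\<in>Lst n. prod_list (map (pmf pK) ks) \<ge> \<tau>}"
          define f where "f = (\<lambda>zs. SOME ks. ks \<in> K \<and> c = (Phi1 n (map fst ks) (map fst zs), Phi2 n (map snd ks) (map snd zs)))"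
          have fz: "f zs \<in> K \<and> c = (Phi1 n (map fst (f zs)) (map fst zs), Phi2 n (map snd (f zs)) (map snd zs))"
            if zs: "zs \<in> V" for zs
          proof -
            obtain ks where ks: "ks \<in> K" "c = (Phi1 n (map fst ks) (map fst zs), Phi2 n (map snd ks) (map snd zs))"
              using zs unfolding V_def K_def by blast
            then show ?thesis unfolding f_def by (rule someI[where x=ks, OF conjI])
          qed
          have "real (card V) \<le> 1 / \<tau>"
          proof (rule card_inj_le_real[of f])
            show "inj_on f V"
            proof (rule inj_onI)
              fix zs zs' assume a: "zs \<in> V" "zs' \<in> V" and e: "f zs = f zs'"
              have l: "length (f zs) = n" using fz[OF a(1)] by (simp add: K_def Lst_def)
              have e1: "Phi1 n (map fst (f zs)) (map fst zs) = Phi1 n (map fst (f zs)) (map fst zs')"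
                and e2: "Phi2 n (map snd (f zs)) (map snd zs) = Phi2 n (map snd (f zs)) (map snd zs')"
                using fz[OF a(1)] fz[OF a(2)] e by (metis prod.inject)+
              have "map fst zs = map fst zs' \<and> map snd zs = map snd zs'"
                using dec_unique[OF s, of "map fst (f zs)" "map snd (f zs)" "map fst zs" "map snd zs" "map fst zs'" "map snd zs'"]
                  a l e1 e2 Dmem by (auto simp: Lst_def V_def)
              then show "zs = zs'" by (auto intro: pm_inj')
            qed
            show "f ` V \<subseteq> K" using fz by blast
            show "finite K" unfolding K_def by (rule finite_subset[OF _ finite_Lst]) auto
            show "real (card K) \<le> 1 / \<tau>" unfolding K_def by (rule card_heavy[OF \<tau>])
          qed
          then show "(\<Sum>zs\<in>V. prod_list (map (\<lambda>_. (1::real)) zs)) \<le> 1 / \<tau>"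
            by (simp add: prod_list_ones)
        qed
      qed
    qed auto
    then show ?thesis by (simp add: ent_UNIV)
  qed
  have sub1: "ent pK \<le> ent (map_pmf fst pK) + ent (map_pmf snd pK)" by (rule ent_subadd)
  have sub2: "ent pX \<le> ent (map_pmf fst pX) + ent (map_pmf snd pX)" by (rule ent_subadd)
  define a1 where "a1 = ent pX - ent (map_pmf snd pX)"
  define a2 where "a2 = ent pX - ent (map_pmf fst pX)"
  define r1 where "r1 = max a1 (ent pX - ent (map_pmf snd pK))"
  define r2 where "r2 = max a2 (ent pX - r1)"
  have sw: "(R1, R2) \<in> R_sw pX" using A B C by (simp add: R_sw_def)
  have "(r1, r2) \<in> R_key pK \<inter> R_sw pX"
  proof -
    have "r1 \<ge> a1" "r1 \<ge> ent pX - ent (map_pmf snd pK)" unfolding r1_def by auto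
    have "r2 \<ge> a2" "r2 \<ge> ent pX - r1" unfolding r2_def by auto
    have "r1 \<le> ent (map_pmf fst pK)" unfolding r1_def a1_def using Dthm sub1 Fthm by auto
    have "r2 \<le> ent (map_pmf snd pK)" unfolding r2_def a2_def using Ethm \<open>r1 \<ge> ent pX - ent (map_pmf snd pK)\<close> by auto
    have "r1 + r2 \<le> ent pK"
    proof (cases "a2 \<ge> ent pX - r1")
      case True
      then have "r2 = a2" unfolding r2_def by simp
      moreover have "r1 + a2 \<le> ent pK" unfolding r1_def a1_def a2_def using sub2 Fthm Ethm by auto
      ultimately show ?thesis by simp
    next
      case False
      then have "r2 = ent pX - r1" unfolding r2_def by simp
      then show ?thesis using Fthm by simp
    qed
    show ?thesis unfolding R_key_def R_sw_def
      using \<open>r1 \<ge> a1\<close> \<open>r2 \<ge> a2\<close> \<open>r2 \<ge> ent pX - r1\<close> \<open>r1 \<le> ent (map_pmf fst pK)\<close>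
        \<open>r2 \<le> ent (map_pmf snd pK)\<close> \<open>r1 + r2 \<le> ent pK\<close> unfolding a1_def a2_def by auto
  qed
  then have "R_key pK \<inter> R_sw pX \<noteq> {}" by blast
  then show "r \<in> R_out pX pK" using sw r by (simp add: R_out_def)
qed


end
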